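(* Let $n=T+1-t$. (i) The value $\tilde{V}_n^2(p_t,\nu_t)$ of the $n$-stage type 2 dual game $\tilde{\Gamma}_n^2(p_t,\nu_t)$ satisfies \[ \tilde{V}_n^2(p_t,\nu_t)=\max_{x\in X,\,u\in U,\,u_{:,0}\in\mathbb{R}^{|L|},\,\tilde{u}\in\mathbb{R}}\ \tilde{u} \] subject to \[ u_{:,0}+\nu_t\geq \tilde{u}\mathbf{1}, \] \[ \sum_{k\in K}{M^{kl}}^Tx_{k,h_1^A,h_1^B}+{u_{l,h_1^A,h_1^B}}^T\mathbf{1} \geq u_{l,0} \mathbf{1},\quad \forall l\in L, \] \[ \sum_{k\in K}{M^{kl}}^Tx_{k,h_{s+1}^A,h_{s+1}^B}+{u_{l,h_{s+1}^A,h_{s+1}^B}}^T\mathbf{1} \geq u_{l,h_{s}^A,h_{s}^B}^{a_{s},b_{s}}\mathbf{1},\quad \forall s=1,\ldots,n-1,\ l\in L,\ h_s^A\in H_s^A,\ h_s^B\in H_s^B, \] where $h_{s+1}^A=(h_s^A,a_s)$, $h_{s+1}^B=(h_s^B,b_s)$ (concatenation), $u_{l,h_n^A,h_n^B}$ is the zero matrix for all $l\in L$, $X$ is the set of player 1's realization plans (vectors satisfying $\mathbf{1}^T x_{k,h_s^A,h_s^B}=x_{k,h_{s-1}^A,h_{s-1}^B}^{a_{s-1}}$ and $x_{k,h_s^A,h_s^B}\geq\mathbf{0}$ for all $s,k,h_s^A,h_s^B$) with $x_{k,h_0^A,h_0^B}^{a_0}=p^k_t$, and $U$ is a real space of appropriate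 dimension. Player 1's security strategy at stage $t$ in the type 2 dual game is \[ \tilde{\sigma}^{*}_t(k,p_t,\nu_t)=\frac{x_{k,h_1^A,h_1^B}^{*}}{p^k_t}, \] where $x^*$ is an optimal solution of this LP. (ii) Similarly, for the type 1 dual game $\tilde{\Gamma}_T^1(\mu,q)$, with $\mu_t$ the regret on player 1's type and $q_t$ the belief on player 2's type at stage $t$, the value $\tilde{V}_n^1(\mu_t,q_t)$ of the $n$-stage type 1 dual game $\tilde{\Gamma}_n^1(\mu_t,q_t)$ satisfies \[ \tilde{V}_n^1(\mu_t,q_t)=\min_{y\in Y,\,w\in W,\,w_{:,0}\in\mathbb{R}^{|K|},\,\tilde{w}\in\mathbb{R}}\ \tilde{w} \] subject to \[ w_{:,0}+\mu_t \leq \tilde{w}\mathbf{1}, \] \[ \sum_{l\in L} M^{kl} y_{l,h_1^A,h_1^B}+w_{k,h_1^A,h_1^B}\mathbf{1} \leq w_{k,0}\mathbf{1},\quad\forall k\in K, \] \[ \sum_{l\in L} M^{kl} y_{l,h_{s+1}^A,h_{s+1}^B}+w_{k,h_{s+1}^A,h_{s+1}^B}\mathbf{1} \leq w_{k,h_{s}^A,h_{s}^B}^{a_{s},b_{s}}\mathbf{1},\quad\forall s=1,\ldots,n-1,\ k\in K,\ h_s^A\in H_s^A,\ h_s^B\in H_s^B, \] where $w_{k,h_n^A,h_n^B}$ is the zero matrix for all $k\in K$, $Y$ is the set of player 2's realization plans (vectors satisfying $\mathbf{1}^T y_{l,h_s^A,h_s^B}=y_{l,h_{s-1}^A,h_{s-1}^B}^{b_{s-1}}$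 and $y_{l,h_s^A,h_s^B}\geq\mathbf{0}$) with $y_{l,h_0^A,h_0^B}^{b_0}=q^l_t$, and $W$ is a real space of appropriate dimension. Player 2's security strategy at stage $t$ in the type 1 dual game is \[ \tilde{\tau}^*_t(l,\mu_t,q_t)=\frac{y_{l,h_1^A,h_1^B}^*}{q^l_t}. \]
   Context: A two-player zero-sum $T$-stage repeated Bayesian game is given by finite type sets $K$ (player 1, maximizer) and $L$ (player 2, minimizer), finite action sets $A,B$, payoff matrices $M^{kl}\in\mathbb{R}^{|A|\times|B|}$ with entries $M^{kl}_{a,b}=M(k,l,a,b)$, and initial type distributions $p\in\Delta(K)$, $q\in\Delta(L)$; types are fixed, actions are announced publicly each stage, and the payoff is $\mathbb{E}\sum_{t=1}^T M(k,l,a_t,b_t)$. History action sequences are $h_s^A\in H_s^A=A^{s-1}$, $h_s^B\in H_s^B=B^{s-1}$. A realization plan of player 1 is $x_{k,h_s^A,h_s^B}^{a_s}=p^k\prod_{r=1}^s\sigma_r^{a_r}(k,h_r^A,h_r^B)$ (vector $x_{k,h_s^A,h_s^B}\in\mathbb{R}^{|A|}$), and of player 2 is $y_{l,h_s^A,h_s^B}^{b_s}=q^l\prod_{r=1}^s\tau_r^{b_r}(l,h_r^A,h_r^B)$; the variables $u_{l,h_s^A,h_s^B}$, $w_{k,h_s^A,h_s^B}$ are $|A|\times|B|$ matrices and $u_{l,0}$, $w_{k,0}$ scalars. In the type 2 dual game $\tilde{\Gamma}_T^2(p,\nu)$ with $\nu\in\mathbb{R}^{|L|}$, player 2 chooses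 his own type $l$ (by a distribution $q$) without informing player 1, player 1's type is drawn from $p$, and player 1's payoff is $\mathbb{E}(\nu^l+\sum_{t=1}^T M(k,l,a_t,b_t))$. In the type 1 dual game $\tilde{\Gamma}_T^1(\mu,q)$ with $\mu\in\mathbb{R}^{|K|}$, player 1 chooses his own type $k$ himself, player 2's type is drawn from $q$, and the payoff is $\mathbb{E}(\mu^k+\sum_{t=1}^T M(k,l,a_t,b_t))$. In the type 2 dual game, $p_t$ is the belief on player 1's type ($p_t^k=P(k\mid l,h_t^A,h_t^B)$, updated by Bayes' rule with $p_1=p$) and $\nu_t$ is the regret on player 2's type ($\nu_{t+1}^l=\nu_t^l+\sum_{k}p_{t+1}^kM^{kl}_{a_t,b_t}$, $\nu_1=\nu$); analogously in the type 1 dual game, $q_t$ is the belief on player 2's type and $\mu_{t+1}^k=\mu_t^k+\sum_l q_{t+1}^lM^{kl}_{a_t,b_t}$, $\mu_1=\mu$. *)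

theory Defs
  imports Complex_Main
begin

text \<open>Types: 'k (player 1), 'l (player 2); actions: 'a (player 1), 'b (player 2).
  A history of stage s (s = 1,2,...) is a pair (ha, hb) of action lists of length s - 1.
  Payoff data: M k l a b.\<close>

definition simplex :: "('i::finite \<Rightarrow> real) \<Rightarrow> bool" where
  "simplex p \<longleftrightarrow> (\<forall>i. 0 \<le> p i) \<and> (\<Sum>i\<in>UNIV. p i) = 1"

definition stoch1 :: "nat \<Rightarrow> ('k \<Rightarrow> 'a list \<Rightarrow> 'b list \<Rightarrow> 'a::finite \<Rightarrow> real) \<Rightarrow> bool" where
  "stoch1 n \<sigma> \<longleftrightarrow> (\<forall>k ha hb. length ha = length hb \<and> length ha < n \<longrightarrow>
      (\<forall>a. 0 \<le> \<sigma> k ha hb a) \<and> (\<Sum>a\<in>UNIV. \<sigma> k ha hb a) = 1)"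

definition stoch2 :: "nat \<Rightarrow> ('l \<Rightarrow> 'a list \<Rightarrow> 'b list \<Rightarrow> 'b::finite \<Rightarrow> real) \<Rightarrow> bool" where
  "stoch2 n \<tau> \<longleftrightarrow> (\<forall>l ha hb. length ha = length hb \<and> length ha < n \<longrightarrow>
      (\<forall>b. 0 \<le> \<tau> l ha hb b) \<and> (\<Sum>b\<in>UNIV. \<tau> l ha hb b) = 1)"

definition histories :: "nat \<Rightarrow> ('a list \<times> 'b list) set" where
  "histories m = {(ha, hb). length ha = m \<and> length hb = m}"

definition reach ::
  "('k \<Rightarrow> 'a list \<Rightarrow> 'b list \<Rightarrow> 'a \<Rightarrow> real) \<Rightarrow> ('l \<Rightarrow> 'a list \<Rightarrow> 'b list \<Rightarrow> 'b \<Rightarrow> real)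
   \<Rightarrow> 'k \<Rightarrow> 'l \<Rightarrow> 'a list \<Rightarrow> 'b list \<Rightarrow> real" where
  "reach \<sigma> \<tau> k l ha hb =
     (\<Prod>r<length ha. \<sigma> k (take r ha) (take r hb) (ha ! r) * \<tau> l (take r ha) (take r hb) (hb ! r))"

definition cond_payoff ::
  "('k \<Rightarrow> 'l \<Rightarrow> 'a \<Rightarrow> 'b \<Rightarrow> real) \<Rightarrow> nat
   \<Rightarrow> ('k \<Rightarrow> 'a list \<Rightarrow> 'b list \<Rightarrow> 'a \<Rightarrow> real) \<Rightarrow> ('l \<Rightarrow> 'a list \<Rightarrow> 'b list \<Rightarrow> 'b \<Rightarrow> real)
   \<Rightarrow> 'k \<Rightarrow> 'l \<Rightarrow> real" where
  "cond_payoff M n \<sigma> \<tau> k l =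
     (\<Sum>h\<in>histories n. reach \<sigma> \<tau> k l (fst h) (snd h) *
         (\<Sum>r<n. M k l (fst h ! r) (snd h ! r)))"

text \<open>Player 2 chooses his type by q (unobserved by player 1) and a strategy \<tau>;
  player 1's type is drawn from p. Player 1's payoff: E(\<nu>^l + sum M).\<close>
definition dual2_payoff ::
  "('k::finite \<Rightarrow> 'l::finite \<Rightarrow> 'a \<Rightarrow> 'b \<Rightarrow> real) \<Rightarrow> nat \<Rightarrow> ('k \<Rightarrow> real) \<Rightarrow> ('l \<Rightarrow> real)
   \<Rightarrow> ('k \<Rightarrow> 'a list \<Rightarrow> 'b list \<Rightarrow> 'a \<Rightarrow> real) \<Rightarrow> ('l \<Rightarrow> real)
   \<Rightarrow> ('l \<Rightarrow> 'a list \<Rightarrow> 'b list \<Rightarrow> 'b \<Rightarrow> real) \<Rightarrow> real" where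
  "dual2_payoff M n p \<nu> \<sigma> q \<tau> =
     (\<Sum>l\<in>UNIV. q l * (\<nu> l + (\<Sum>k\<in>UNIV. p k * cond_payoff M n \<sigma> \<tau> k l)))"

definition dual2_guarantee ::
  "('k::finite \<Rightarrow> 'l::finite \<Rightarrow> 'a::finite \<Rightarrow> 'b::finite \<Rightarrow> real) \<Rightarrow> nat \<Rightarrow> ('k \<Rightarrow> real) \<Rightarrow> ('l \<Rightarrow> real)
   \<Rightarrow> ('k \<Rightarrow> 'a list \<Rightarrow> 'b list \<Rightarrow> 'a \<Rightarrow> real) \<Rightarrow> real" where
  "dual2_guarantee M n p \<nu> \<sigma> =
     (INF qt\<in>{(q, \<tau>). simplex q \<and> stoch2 n \<tau>}. dual2_payoff M n p \<nu> \<sigma> (fst qt) (snd qt))"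

text \<open>Value (lower value = max-min; the theorem also asserts it equals the upper value).\<close>
definition dual2_value ::
  "('k::finite \<Rightarrow> 'l::finite \<Rightarrow> 'a::finite \<Rightarrow> 'b::finite \<Rightarrow> real) \<Rightarrow> nat \<Rightarrow> ('k \<Rightarrow> real) \<Rightarrow> ('l \<Rightarrow> real) \<Rightarrow> real" where
  "dual2_value M n p \<nu> = (SUP \<sigma>\<in>{\<sigma>. stoch1 n \<sigma>}. dual2_guarantee M n p \<nu> \<sigma>)"

definition dual2_upper_value ::
  "('k::finite \<Rightarrow> 'l::finite \<Rightarrow> 'a::finite \<Rightarrow> 'b::finite \<Rightarrow> real) \<Rightarrow> nat \<Rightarrow> ('k \<Rightarrow> real) \<Rightarrow> ('l \<Rightarrow> real) \<Rightarrow> real" where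
  "dual2_upper_value M n p \<nu> =
     (INF qt\<in>{(q, \<tau>). simplex q \<and> stoch2 n \<tau>}.
        SUP \<sigma>\<in>{\<sigma>. stoch1 n \<sigma>}. dual2_payoff M n p \<nu> \<sigma> (fst qt) (snd qt))"

definition dual2_security_strategy ::
  "('k::finite \<Rightarrow> 'l::finite \<Rightarrow> 'a::finite \<Rightarrow> 'b::finite \<Rightarrow> real) \<Rightarrow> nat \<Rightarrow> ('k \<Rightarrow> real) \<Rightarrow> ('l \<Rightarrow> real)
   \<Rightarrow> ('k \<Rightarrow> 'a list \<Rightarrow> 'b list \<Rightarrow> 'a \<Rightarrow> real) \<Rightarrow> bool" where
  "dual2_security_strategy M n p \<nu> \<sigma> \<longleftrightarrow>
     stoch1 n \<sigma> \<and> dual2_guarantee M n p \<nu> \<sigma> = dual2_value M n p \<nu>"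

text \<open>Player 1 chooses his own type by a distribution \<pi> and a strategy \<sigma>;
  player 2's type is drawn from q. Player 1's payoff: E(\<mu>^k + sum M).\<close>
definition dual1_payoff ::
  "('k::finite \<Rightarrow> 'l::finite \<Rightarrow> 'a \<Rightarrow> 'b \<Rightarrow> real) \<Rightarrow> nat \<Rightarrow> ('k \<Rightarrow> real) \<Rightarrow> ('l \<Rightarrow> real)
   \<Rightarrow> ('k \<Rightarrow> real) \<Rightarrow> ('k \<Rightarrow> 'a list \<Rightarrow> 'b list \<Rightarrow> 'a \<Rightarrow> real)
   \<Rightarrow> ('l \<Rightarrow> 'a list \<Rightarrow> 'b list \<Rightarrow> 'b \<Rightarrow> real) \<Rightarrow> real" where
  "dual1_payoff M n \<mu> q \<pi> \<sigma> \<tau> =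
     (\<Sum>k\<in>UNIV. \<pi> k * (\<mu> k + (\<Sum>l\<in>UNIV. q l * cond_payoff M n \<sigma> \<tau> k l)))"

definition dual1_guarantee ::
  "('k::finite \<Rightarrow> 'l::finite \<Rightarrow> 'a::finite \<Rightarrow> 'b::finite \<Rightarrow> real) \<Rightarrow> nat \<Rightarrow> ('k \<Rightarrow> real) \<Rightarrow> ('l \<Rightarrow> real)
   \<Rightarrow> ('l \<Rightarrow> 'a list \<Rightarrow> 'b list \<Rightarrow> 'b \<Rightarrow> real) \<Rightarrow> real" where
  "dual1_guarantee M n \<mu> q \<tau> =
     (SUP ps\<in>{(\<pi>, \<sigma>). simplex \<pi> \<and> stoch1 n \<sigma>}. dual1_payoff M n \<mu> q (fst ps) (snd ps) \<tau>)"

text \<open>Value (upper value = min-max; the theorem also asserts it equals the lower value).\<close>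
definition dual1_value ::
  "('k::finite \<Rightarrow> 'l::finite \<Rightarrow> 'a::finite \<Rightarrow> 'b::finite \<Rightarrow> real) \<Rightarrow> nat \<Rightarrow> ('k \<Rightarrow> real) \<Rightarrow> ('l \<Rightarrow> real) \<Rightarrow> real" where
  "dual1_value M n \<mu> q = (INF \<tau>\<in>{\<tau>. stoch2 n \<tau>}. dual1_guarantee M n \<mu> q \<tau>)"

definition dual1_lower_value ::
  "('k::finite \<Rightarrow> 'l::finite \<Rightarrow> 'a::finite \<Rightarrow> 'b::finite \<Rightarrow> real) \<Rightarrow> nat \<Rightarrow> ('k \<Rightarrow> real) \<Rightarrow> ('l \<Rightarrow> real) \<Rightarrow> real" where
  "dual1_lower_value M n \<mu> q =
     (SUP ps\<in>{(\<pi>, \<sigma>). simplex \<pi> \<and> stoch1 n \<sigma>}.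
        INF \<tau>\<in>{\<tau>. stoch2 n \<tau>}. dual1_payoff M n \<mu> q (fst ps) (snd ps) \<tau>)"

definition dual1_security_strategy ::
  "('k::finite \<Rightarrow> 'l::finite \<Rightarrow> 'a::finite \<Rightarrow> 'b::finite \<Rightarrow> real) \<Rightarrow> nat \<Rightarrow> ('k \<Rightarrow> real) \<Rightarrow> ('l \<Rightarrow> real)
   \<Rightarrow> ('l \<Rightarrow> 'a list \<Rightarrow> 'b list \<Rightarrow> 'b \<Rightarrow> real) \<Rightarrow> bool" where
  "dual1_security_strategy M n \<mu> q \<tau> \<longleftrightarrow>
     stoch2 n \<tau> \<and> dual1_guarantee M n \<mu> q \<tau> = dual1_value M n \<mu> q"

text \<open>Realization plans.  x k ha hb a  is  x^a_{k,h^A_s,h^B_s}  where length ha = length hb = s - 1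
  (s = 1..n); the parent of (ha, hb) at stage s = 1 is the prior weight p^k.\<close>
definition realization_plan1 ::
  "nat \<Rightarrow> ('k \<Rightarrow> real) \<Rightarrow> ('k \<Rightarrow> 'a list \<Rightarrow> 'b list \<Rightarrow> 'a::finite \<Rightarrow> real) \<Rightarrow> bool" where
  "realization_plan1 n p x \<longleftrightarrow>
     (\<forall>k ha hb. length ha = length hb \<and> length ha < n \<longrightarrow>
        (\<forall>a. 0 \<le> x k ha hb a) \<and>
        (\<Sum>a\<in>UNIV. x k ha hb a) =
          (if ha = [] then p k else x k (butlast ha) (butlast hb) (last ha)))"

definition realization_plan2 ::
  "nat \<Rightarrow> ('l \<Rightarrow> real) \<Rightarrow> ('l \<Rightarrow> 'a list \<Rightarrow> 'b list \<Rightarrow> 'b::finite \<Rightarrow> real) \<Rightarrow> bool" where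
  "realization_plan2 n q y \<longleftrightarrow>
     (\<forall>l ha hb. length ha = length hb \<and> length ha < n \<longrightarrow>
        (\<forall>b. 0 \<le> y l ha hb b) \<and>
        (\<Sum>b\<in>UNIV. y l ha hb b) =
          (if hb = [] then q l else y l (butlast ha) (butlast hb) (last hb)))"

text \<open>Feasibility for the LP of part (i), with objective value ut.
  u l ha hb a b is the (a,b) entry of the matrix u_{l,h^A,h^B}; u0 l is u_{l,0}.\<close>
definition lp2_feasible ::
  "('k::finite \<Rightarrow> 'l::finite \<Rightarrow> 'a::finite \<Rightarrow> 'b::finite \<Rightarrow> real) \<Rightarrow> nat \<Rightarrow> ('k \<Rightarrow> real) \<Rightarrow> ('l \<Rightarrow> real)
   \<Rightarrow> ('k \<Rightarrow> 'a list \<Rightarrow> 'b list \<Rightarrow> 'a \<Rightarrow> real) \<Rightarrow> ('l \<Rightarrow> 'a list \<Rightarrow> 'b list \<Rightarrow> 'a \<Rightarrow> 'b \<Rightarrow> real)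
   \<Rightarrow> ('l \<Rightarrow> real) \<Rightarrow> real \<Rightarrow> bool" where
  "lp2_feasible M n p \<nu> x u u0 ut \<longleftrightarrow>
     realization_plan1 n p x \<and>
     (\<forall>l ha hb a b. length ha = n - 1 \<and> length hb = n - 1 \<longrightarrow> u l ha hb a b = 0) \<and>
     (\<forall>l. u0 l + \<nu> l \<ge> ut) \<and>
     (\<forall>l b. (\<Sum>a\<in>UNIV. (\<Sum>k\<in>UNIV. M k l a b * x k [] [] a) + u l [] [] a b) \<ge> u0 l) \<and>
     (\<forall>s l ha hb as bs b. 1 \<le> s \<and> s \<le> n - 1 \<and> length ha = s - 1 \<and> length hb = s - 1 \<longrightarrow>
        (\<Sum>a\<in>UNIV. (\<Sum>k\<in>UNIV. M k l a b * x k (ha @ [as]) (hb @ [bs]) a)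
                     + u l (ha @ [as]) (hb @ [bs]) a b) \<ge> u l ha hb as bs)"

definition lp1_feasible ::
  "('k::finite \<Rightarrow> 'l::finite \<Rightarrow> 'a::finite \<Rightarrow> 'b::finite \<Rightarrow> real) \<Rightarrow> nat \<Rightarrow> ('k \<Rightarrow> real) \<Rightarrow> ('l \<Rightarrow> real)
   \<Rightarrow> ('l \<Rightarrow> 'a list \<Rightarrow> 'b list \<Rightarrow> 'b \<Rightarrow> real) \<Rightarrow> ('k \<Rightarrow> 'a list \<Rightarrow> 'b list \<Rightarrow> 'a \<Rightarrow> 'b \<Rightarrow> real)
   \<Rightarrow> ('k \<Rightarrow> real) \<Rightarrow> real \<Rightarrow> bool" where
  "lp1_feasible M n \<mu> q y w w0 wt \<longleftrightarrow>
     realization_plan2 n q y \<and>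
     (\<forall>k ha hb a b. length ha = n - 1 \<and> length hb = n - 1 \<longrightarrow> w k ha hb a b = 0) \<and>
     (\<forall>k. w0 k + \<mu> k \<le> wt) \<and>
     (\<forall>k a. (\<Sum>b\<in>UNIV. (\<Sum>l\<in>UNIV. M k l a b * y l [] [] b) + w k [] [] a b) \<le> w0 k) \<and>
     (\<forall>s k ha hb as bs a. 1 \<le> s \<and> s \<le> n - 1 \<and> length ha = s - 1 \<and> length hb = s - 1 \<longrightarrow>
        (\<Sum>b\<in>UNIV. (\<Sum>l\<in>UNIV. M k l a b * y l (ha @ [as]) (hb @ [bs]) b)
                     + w k (ha @ [as]) (hb @ [bs]) a b) \<le> w k ha hb as bs)"

text \<open>Where the parent weight is 0 (unreachable
  history) the strategy is uniform.\<close>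
definition strategy_of_plan1 ::
  "('k \<Rightarrow> real) \<Rightarrow> ('k \<Rightarrow> 'a list \<Rightarrow> 'b list \<Rightarrow> 'a::finite \<Rightarrow> real)
   \<Rightarrow> 'k \<Rightarrow> 'a list \<Rightarrow> 'b list \<Rightarrow> 'a \<Rightarrow> real" where
  "strategy_of_plan1 p x k ha hb a =
     (let w = (if ha = [] then p k else x k (butlast ha) (butlast hb) (last ha))
      in if w > 0 then x k ha hb a / w else 1 / real (card (UNIV :: 'a set)))"

definition strategy_of_plan2 ::
  "('l \<Rightarrow> real) \<Rightarrow> ('l \<Rightarrow> 'a list \<Rightarrow> 'b list \<Rightarrow> 'b::finite \<Rightarrow> real)
   \<Rightarrow> 'l \<Rightarrow> 'a list \<Rightarrow> 'b list \<Rightarrow> 'b \<Rightarrow> real" where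
  "strategy_of_plan2 q y l ha hb b =
     (let w = (if hb = [] then q l else y l (butlast ha) (butlast hb) (last hb))
      in if w > 0 then y l ha hb b / w else 1 / real (card (UNIV :: 'b set)))"

end

theory Submission
  imports Defs "HOL-Analysis.Function_Topology"
begin

lemma conn01:
  fixes g h :: "real \<Rightarrow> real"
  assumes "continuous_on UNIV g" "continuous_on UNIV h"
    and "\<forall>s\<in>{0..1}. g s > 0 \<or> h s > 0"
    and "\<forall>s\<in>{0..1}. \<not> (g s > 0 \<and> h s > 0)"
    and "g 0 > 0" "h 1 > 0"
  shows False
proof -
  have o1: "open {s. g s > 0}" using assms(1)
    by (simp add: open_Collect_less continuous_on_const)
  have o2: "open {s. h s > 0}" using assms(2)
    by (simp add: open_Collect_less continuous_on_const)
  have "{s. g s > 0} \<inter> {0..1} = {} \<or> {s. h s > 0} \<inter> {0..1} = {}"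
    apply (rule connectedD[OF connected_Icc o1 o2])
    using assms(3,4) by auto
  then show False using assms(5,6) by auto
qed

lemma minimax_two:
  fixes F :: "'x \<Rightarrow> 'y \<Rightarrow> real"
  assumes cvX: "\<forall>x1\<in>X. \<forall>x2\<in>X. \<forall>t\<in>{0..1}. cx t x1 x2 \<in> X"
    and affX: "\<forall>x1\<in>X. \<forall>x2\<in>X. \<forall>t\<in>{0..1}. \<forall>y\<in>Y. F (cx t x1 x2) y = (1-t)*F x1 y + t*F x2 y"
    and affY: "\<forall>y1\<in>Y. \<forall>y2\<in>Y. \<forall>t\<in>{0..1}. \<forall>x\<in>X. F x (cy t y1 y2) = (1-t)*F x y1 + t*F x y2"
    and y1: "y1 \<in> Y" and y2: "y2 \<in> Y"
    and hyp: "\<forall>t\<in>{0..1}. \<exists>x\<in>X. F x (cy t y1 y2) > \<alpha>"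
  shows "\<exists>x\<in>X. F x y1 > \<alpha> \<and> F x y2 > \<alpha>"
proof (rule ccontr)
  assume "\<not> ?thesis"
  then have H: "\<forall>x\<in>X. F x y1 \<le> \<alpha> \<or> F x y2 \<le> \<alpha>" by force
  define \<phi> where "\<phi> x t = (1-t)*F x y1 + t*F x y2" for x t
  have phi_eq: "F x (cy t y1 y2) = \<phi> x t" if "x \<in> X" "t \<in> {0..1}" for x t
    using affY y1 y2 that by (simp add: \<phi>_def)
  have cont: "continuous_on UNIV (\<phi> x)" for x
    unfolding \<phi>_def by (intro continuous_intros)
  have split: "F x y1 > \<alpha> \<or> F x y2 > \<alpha>" if "\<phi> x t > \<alpha>" "t \<in> {0..1}" for x t
  proof (rule ccontr)
    assume "\<not> ?thesis"
    then have "F x y1 \<le> \<alpha>" "F x y2 \<le> \<alpha>" by auto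
    then have "(1-t)*F x y1 \<le> (1-t)*\<alpha>" "t*F x y2 \<le> t*\<alpha>"
      using that(2) by (auto intro: mult_left_mono)
    then have "\<phi> x t \<le> \<alpha>" unfolding \<phi>_def by (simp add: algebra_simps)
    then show False using that by simp
  qed
  define A where "A = {x\<in>X. F x y1 > \<alpha>}"
  define B where "B = {x\<in>X. F x y2 > \<alpha>}"
  define U where "U = (\<Union>x\<in>A. {t. \<phi> x t > \<alpha>})"
  define V where "V = (\<Union>x\<in>B. {t. \<phi> x t > \<alpha>})"
  have oU: "open U" unfolding U_def
    by (intro open_UN ballI open_Collect_less continuous_intros, simp_all add: cont)
  have oV: "open V" unfolding V_def
    by (intro open_UN ballI open_Collect_less continuous_intros, simp_all add: cont)
  have cover: "{0..1} \<subseteq> U \<union> V"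
  proof
    fix t :: real assume t: "t \<in> {0..1}"
    then obtain x where x: "x \<in> X" "F x (cy t y1 y2) > \<alpha>" using hyp by blast
    then have "\<phi> x t > \<alpha>" using phi_eq t by simp
    then show "t \<in> U \<union> V" using split[OF _ t] x unfolding U_def V_def A_def B_def by blast
  qed
  have disj: "U \<inter> V \<inter> {0..1} = {}"
  proof (rule ccontr)
    assume "U \<inter> V \<inter> {0..1} \<noteq> {}"
    then obtain t xa xb where t: "t \<in> {0..1}" and xa: "xa \<in> A" "\<phi> xa t > \<alpha>"
      and xb: "xb \<in> B" "\<phi> xb t > \<alpha>" unfolding U_def V_def by blast
    have xaX: "xa \<in> X" and xbX: "xb \<in> X" using xa xb unfolding A_def B_def by auto
    define g where "g s = ((1-s)*F xa y1 + s*F xb y1) - \<alpha>" for s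
    define h where "h s = ((1-s)*F xa y2 + s*F xb y2) - \<alpha>" for s
    have gF: "g s = F (cx s xa xb) y1 - \<alpha>" "h s = F (cx s xa xb) y2 - \<alpha>" if "s \<in> {0..1}" for s
      using affX xaX xbX y1 y2 that by (auto simp: g_def h_def)
    show False
    proof (rule conn01[of g h])
      show "continuous_on UNIV g" "continuous_on UNIV h" unfolding g_def h_def
        by (intro continuous_intros)+
      show "\<forall>s\<in>{0..1}. g s > 0 \<or> h s > 0"
      proof
        fix s :: real assume s: "s \<in> {0..1}"
        have xs: "cx s xa xb \<in> X" using cvX xaX xbX s by blast
        have e1: "F (cx s xa xb) y1 = (1-s)*F xa y1 + s*F xb y1"
          and e2: "F (cx s xa xb) y2 = (1-s)*F xa y2 + s*F xb y2"
          using affX xaX xbX s y1 y2 by auto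
        have "\<phi> (cx s xa xb) t = (1-s)*\<phi> xa t + s*\<phi> xb t"
          unfolding \<phi>_def e1 e2 by (simp add: algebra_simps)
        also have "\<dots> > (1-s)*\<alpha> + s*\<alpha>"
        proof -
          have "(1-s)*\<phi> xa t \<ge> (1-s)*\<alpha>" using s xa by (auto intro: mult_left_mono)
          moreover have "s*\<phi> xb t \<ge> s*\<alpha>" using s xb by (auto intro: mult_left_mono)
          moreover have "(1-s)*\<phi> xa t > (1-s)*\<alpha> \<or> s*\<phi> xb t > s*\<alpha>"
            using s xa xb by (cases "s = 1") auto
          ultimately show ?thesis by linarith
        qed
        finally have "\<phi> (cx s xa xb) t > \<alpha>" by (simp add: algebra_simps)
        then have "F (cx s xa xb) y1 > \<alpha> \<or> F (cx s xa xb) y2 > \<alpha>" using split t by blast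
        then show "g s > 0 \<or> h s > 0" using gF[OF s] by auto
      qed
      show "\<forall>s\<in>{0..1}. \<not> (g s > 0 \<and> h s > 0)"
      proof
        fix s :: real assume s: "s \<in> {0..1}"
        have xs: "cx s xa xb \<in> X" using cvX xaX xbX s by blast
        show "\<not> (g s > 0 \<and> h s > 0)" using H xs gF[OF s] by auto
      qed
      show "g 0 > 0" using xa unfolding g_def A_def by simp
      show "h 1 > 0" using xb unfolding h_def B_def by simp
    qed
  qed
  have "U \<inter> {0..1} = {} \<or> V \<inter> {0..1} = {}"
    by (rule connectedD[OF connected_Icc oU oV disj cover])
  moreover have "0 \<in> U"
  proof -
    obtain x where x: "x \<in> X" "F x (cy 0 y1 y2) > \<alpha>" using hyp by force
    then have "\<phi> x 0 > \<alpha>" using phi_eq by simp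
    then show ?thesis using x unfolding U_def A_def \<phi>_def by auto
  qed
  moreover have "1 \<in> V"
  proof -
    obtain x where x: "x \<in> X" "F x (cy 1 y1 y2) > \<alpha>" using hyp by force
    then have "\<phi> x 1 > \<alpha>" using phi_eq by simp
    then show ?thesis using x unfolding V_def B_def \<phi>_def by auto
  qed
  ultimately show False by auto
qed

lemma closedin_ge_aux:
  fixes g :: "'x::topological_space \<Rightarrow> real"
  assumes "continuous_on X g"
  shows "closedin (top_of_set X) {x\<in>X. g x \<ge> c}"
proof -
  have "closedin (top_of_set X) (X \<inter> g -` {c..})"
    by (rule continuous_closedin_preimage[OF assms]) simp
  moreover have "X \<inter> g -` {c..} = {x\<in>X. g x \<ge> c}" by auto
  ultimately show ?thesis by simp
qed

lemma minimax_finite: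
  fixes F :: "'x \<Rightarrow> 'y \<Rightarrow> real"
  assumes "finite G"
  shows "\<lbrakk>\<forall>x1\<in>X. \<forall>x2\<in>X. \<forall>t\<in>{0..1}. cx t x1 x2 \<in> X;
    \<forall>x1\<in>X. \<forall>x2\<in>X. \<forall>t\<in>{0..1}. \<forall>y\<in>Y. F (cx t x1 x2) y = (1-t)*F x1 y + t*F x2 y;
    \<forall>y1\<in>Y. \<forall>y2\<in>Y. \<forall>t\<in>{0..1}. cy t y1 y2 \<in> Y;
    \<forall>y1\<in>Y. \<forall>y2\<in>Y. \<forall>t\<in>{0..1}. \<forall>x\<in>X. F x (cy t y1 y2) = (1-t)*F x y1 + t*F x y2;
    X \<noteq> {}; \<forall>y\<in>Y. \<exists>x\<in>X. F x y > \<alpha>; G \<subseteq> Y\<rbrakk>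
    \<Longrightarrow> \<exists>x\<in>X. \<forall>y\<in>G. F x y > \<alpha>"
  using assms
proof (induction G arbitrary: X rule: finite_induct)
  case empty
  then show ?case by auto
next
  case (insert g G X)
  define X2 where "X2 = {x\<in>X. F x g > \<alpha>}"
  have gY: "g \<in> Y" using insert by auto
  have cv2: "\<forall>x1\<in>X2. \<forall>x2\<in>X2. \<forall>t\<in>{0..1}. cx t x1 x2 \<in> X2"
  proof (intro ballI)
    fix x1 x2 and t :: real assume h: "x1 \<in> X2" "x2 \<in> X2" "t \<in> {0..1}"
    have "F (cx t x1 x2) g = (1-t)*F x1 g + t*F x2 g" using insert.prems(2) h gY unfolding X2_def by auto
    also have "\<dots> > (1-t)*\<alpha> + t*\<alpha>"
    proof -
      have "(1-t)*F x1 g \<ge> (1-t)*\<alpha>" using h by (auto intro: mult_left_mono simp: X2_def)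
      moreover have "t*F x2 g \<ge> t*\<alpha>" using h by (auto intro: mult_left_mono simp: X2_def)
      moreover have "(1-t)*F x1 g > (1-t)*\<alpha> \<or> t*F x2 g > t*\<alpha>"
        using h by (cases "t = 1") (auto simp: X2_def)
      ultimately show ?thesis by linarith
    qed
    finally have "F (cx t x1 x2) g > \<alpha>" by (simp add: algebra_simps)
    then show "cx t x1 x2 \<in> X2" using insert.prems(1) h unfolding X2_def by auto
  qed
  have hyp2: "\<forall>y\<in>Y. \<exists>x\<in>X2. F x y > \<alpha>"
  proof
    fix y assume yY: "y \<in> Y"
    have "\<exists>x\<in>X. F x y > \<alpha> \<and> F x g > \<alpha>"
    proof (rule minimax_two[where cx=cx and cy=cy and Y=Y])
      show "\<forall>t\<in>{0..1}. \<exists>x\<in>X. \<alpha> < F x (cy t y g)"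
        using insert.prems(3,6) yY gY by blast
    qed (use insert.prems yY gY in auto)
    then show "\<exists>x\<in>X2. F x y > \<alpha>" unfolding X2_def by auto
  qed
  have ne2: "X2 \<noteq> {}" using hyp2 gY by auto
  have sub: "X2 \<subseteq> X" unfolding X2_def by auto
  have aff2: "\<forall>x1\<in>X2. \<forall>x2\<in>X2. \<forall>t\<in>{0..1}. \<forall>y\<in>Y. F (cx t x1 x2) y = (1-t)*F x1 y + t*F x2 y"
    using insert.prems(2) sub by blast
  have affY2: "\<forall>y1\<in>Y. \<forall>y2\<in>Y. \<forall>t\<in>{0..1}. \<forall>x\<in>X2. F x (cy t y1 y2) = (1-t)*F x y1 + t*F x y2"
    using insert.prems(4) sub by blast
  have GY: "G \<subseteq> Y" using insert.prems(7) by blast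
  obtain x where "x \<in> X2" "\<forall>y\<in>G. F x y > \<alpha>"
    using insert.IH[OF cv2 aff2 insert.prems(3) affY2 ne2 hyp2 GY] by blast
  then show ?case unfolding X2_def by auto
qed

lemma minimax_alpha:
  fixes F :: "'x::topological_space \<Rightarrow> 'y \<Rightarrow> real"
  assumes cvX: "\<forall>x1\<in>X. \<forall>x2\<in>X. \<forall>t\<in>{0..1}. cx t x1 x2 \<in> X"
    and affX: "\<forall>x1\<in>X. \<forall>x2\<in>X. \<forall>t\<in>{0..1}. \<forall>y\<in>Y. F (cx t x1 x2) y = (1-t)*F x1 y + t*F x2 y"
    and cvY: "\<forall>y1\<in>Y. \<forall>y2\<in>Y. \<forall>t\<in>{0..1}. cy t y1 y2 \<in> Y"
    and affY: "\<forall>y1\<in>Y. \<forall>y2\<in>Y. \<forall>t\<in>{0..1}. \<forall>x\<in>X. F x (cy t y1 y2) = (1-t)*F x y1 + t*F x y2"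
    and cpt: "compact X" and ne: "X \<noteq> {}"
    and cont: "\<forall>y\<in>Y. continuous_on X (\<lambda>x. F x y)"
    and hyp: "\<forall>y\<in>Y. \<exists>x\<in>X. F x y > \<alpha>"
  shows "\<exists>x\<in>X. \<forall>y\<in>Y. F x y \<ge> \<alpha>"
proof -
  have cl: "\<exists>C. closed C \<and> X \<inter> C = {x\<in>X. F x y \<ge> \<alpha>}" if "y \<in> Y" for y
  proof -
    have "closedin (top_of_set X) {x\<in>X. F x y \<ge> \<alpha>}"
      using cont that by (intro closedin_ge_aux) auto
    then show ?thesis by (auto simp: closedin_closed)
  qed
  then obtain C where C: "\<And>y. y \<in> Y \<Longrightarrow> closed (C y) \<and> X \<inter> C y = {x\<in>X. F x y \<ge> \<alpha>}"
    by metis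
  have "X \<inter> (\<Inter>y\<in>Y. C y) \<noteq> {}"
  proof (rule compact_imp_fip_image[OF cpt])
    show "closed (C y)" if "y \<in> Y" for y using C that by auto
    fix G assume G: "finite G" "G \<subseteq> Y"
    obtain x where x: "x \<in> X" "\<forall>y\<in>G. F x y > \<alpha>"
      using minimax_finite[OF G(1) cvX affX cvY affY ne hyp G(2)] by blast
    have "x \<in> C y" if "y \<in> G" for y
    proof -
      have "y \<in> Y" using G that by auto
      then have "X \<inter> C y = {x\<in>X. F x y \<ge> \<alpha>}" using C by blast
      moreover have "F x y \<ge> \<alpha>" using x that by force
      ultimately show ?thesis using x(1) by blast
    qed
    then have "x \<in> X \<inter> (\<Inter>y\<in>G. C y)" using x by auto
    then show "X \<inter> (\<Inter>y\<in>G. C y) \<noteq> {}" by auto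
  qed
  then obtain x where "x \<in> X" "\<forall>y\<in>Y. x \<in> C y" by auto
  then show ?thesis using C by auto
qed

lemma minimax_abs:
  fixes F :: "'x::topological_space \<Rightarrow> 'y \<Rightarrow> real"
  assumes cvX: "\<forall>x1\<in>X. \<forall>x2\<in>X. \<forall>t\<in>{0..1}. cx t x1 x2 \<in> X"
    and affX: "\<forall>x1\<in>X. \<forall>x2\<in>X. \<forall>t\<in>{0..1}. \<forall>y\<in>Y. F (cx t x1 x2) y = (1-t)*F x1 y + t*F x2 y"
    and cvY: "\<forall>y1\<in>Y. \<forall>y2\<in>Y. \<forall>t\<in>{0..1}. cy t y1 y2 \<in> Y"
    and affY: "\<forall>y1\<in>Y. \<forall>y2\<in>Y. \<forall>t\<in>{0..1}. \<forall>x\<in>X. F x (cy t y1 y2) = (1-t)*F x y1 + t*F x y2"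
    and cpt: "compact X" and ne: "X \<noteq> {}"
    and cont: "\<forall>y\<in>Y. continuous_on X (\<lambda>x. F x y)"
  shows "\<exists>x0\<in>X. \<forall>c. (\<forall>y\<in>Y. \<exists>x\<in>X. F x y > c) \<longrightarrow> (\<forall>y\<in>Y. F x0 y \<ge> c)"
proof -
  define CS where "CS = {c. \<forall>y\<in>Y. \<exists>x\<in>X. F x y > c}"
  have cl: "\<exists>K. closed K \<and> X \<inter> K = {x\<in>X. F x y \<ge> c}" if "y \<in> Y" for y c
  proof -
    have "closedin (top_of_set X) {x\<in>X. F x y \<ge> c}"
      using cont that by (intro closedin_ge_aux) auto
    then show ?thesis by (auto simp: closedin_closed)
  qed
  then obtain K where K: "\<And>y c. y \<in> Y \<Longrightarrow> closed (K y c) \<and> X \<inter> K y c = {x\<in>X. F x y \<ge> c}"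
    by metis
  have "X \<inter> (\<Inter>yc\<in>Y \<times> CS. K (fst yc) (snd yc)) \<noteq> {}"
  proof (rule compact_imp_fip_image[OF cpt])
    show "closed (K (fst yc) (snd yc))" if "yc \<in> Y \<times> CS" for yc using K that by auto
    fix G assume G: "finite G" "G \<subseteq> Y \<times> CS"
    show "X \<inter> (\<Inter>yc\<in>G. K (fst yc) (snd yc)) \<noteq> {}"
    proof (cases "G = {}")
      case True then show ?thesis using ne by auto
    next
      case False
      define c where "c = Max (snd ` G)"
      have "c \<in> snd ` G" unfolding c_def using G False by (intro Max_in) auto
      then have cCS: "c \<in> CS" using G by force
      have "\<forall>y\<in>Y. \<exists>x\<in>X. F x y > c" using cCS unfolding CS_def by blast
      then obtain x where x: "x \<in> X" "\<forall>y\<in>Y. F x y \<ge> c"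
        using minimax_alpha[OF cvX affX cvY affY cpt ne cont] by blast
      have "x \<in> K (fst yc) (snd yc)" if "yc \<in> G" for yc
      proof -
        have "snd yc \<le> c" unfolding c_def using G that by auto
        then have "F x (fst yc) \<ge> snd yc" using x G that by force
        moreover have "fst yc \<in> Y" using G that by auto
        then have "X \<inter> K (fst yc) (snd yc) = {x\<in>X. F x (fst yc) \<ge> snd yc}" using K by blast
        ultimately show ?thesis using x(1) by blast
      qed
      then show ?thesis using x by auto
    qed
  qed
  then obtain x0 where x0: "x0 \<in> X" "\<forall>yc\<in>Y \<times> CS. x0 \<in> K (fst yc) (snd yc)" by auto
  show ?thesis
  proof (intro bexI[OF _ x0(1)] allI impI ballI)
    fix c y assume "\<forall>y\<in>Y. \<exists>x\<in>X. F x y > c" "y \<in> Y"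
    then have "(y, c) \<in> Y \<times> CS" unfolding CS_def by auto
    then show "F x0 y \<ge> c" using x0 K[of y c] by auto
  qed
qed


definition rch1 :: "('k \<Rightarrow> 'a list \<Rightarrow> 'b list \<Rightarrow> 'a \<Rightarrow> real) \<Rightarrow> 'k \<Rightarrow> 'a list \<Rightarrow> 'b list \<Rightarrow> real" where
  "rch1 \<sigma> k ha hb = (\<Prod>r<length ha. \<sigma> k (take r ha) (take r hb) (ha ! r))"

definition rch2 :: "('l \<Rightarrow> 'a list \<Rightarrow> 'b list \<Rightarrow> 'b \<Rightarrow> real) \<Rightarrow> 'l \<Rightarrow> 'a list \<Rightarrow> 'b list \<Rightarrow> real" where
  "rch2 \<tau> l ha hb = (\<Prod>r<length hb. \<tau> l (take r ha) (take r hb) (hb ! r))"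

lemma finite_histories: "finite (histories m :: ('a::finite list \<times> 'b::finite list) set)"
proof -
  have "histories m = {ha::'a list. length ha = m} \<times> {hb::'b list. length hb = m}"
    unfolding histories_def by auto
  moreover have "finite {ha::'a list. length ha = m}" using finite_lists_length_eq[of "UNIV::'a set" m] by simp
  moreover have "finite {hb::'b list. length hb = m}" using finite_lists_length_eq[of "UNIV::'b set" m] by simp
  ultimately show ?thesis by simp
qed

lemma histories_Suc:
  "histories (Suc m) = (\<lambda>(h,a,b). (fst h @ [a], snd h @ [b])) ` (histories m \<times> UNIV \<times> UNIV)"
proof (rule set_eqI, rule iffI)
  fix h :: "'a list \<times> 'b list" assume "h \<in> histories (Suc m)"
  then obtain ha hb where h: "h = (ha, hb)" "length ha = Suc m" "length hb = Suc m"
    unfolding histories_def by auto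
  then have "ha = butlast ha @ [last ha]" "hb = butlast hb @ [last hb]"
    by (metis append_butlast_last_id list.size(3) nat.simps(3))+
  moreover have "(butlast ha, butlast hb) \<in> histories m" using h unfolding histories_def by auto
  ultimately show "h \<in> (\<lambda>(h,a,b). (fst h @ [a], snd h @ [b])) ` (histories m \<times> UNIV \<times> UNIV)"
    using h by (auto intro!: image_eqI[where x="((butlast ha, butlast hb), last ha, last hb)"])
next
  fix h :: "'a list \<times> 'b list"
  assume "h \<in> (\<lambda>(h,a,b). (fst h @ [a], snd h @ [b])) ` (histories m \<times> UNIV \<times> UNIV)"
  then show "h \<in> histories (Suc m)" unfolding histories_def by auto
qed

lemma sum_histories_Suc:
  fixes f :: "'a::finite list \<times> 'b::finite list \<Rightarrow> real"
  shows "(\<Sum>h\<in>histories (Suc m). f h) = (\<Sum>h\<in>histories m. \<Sum>a\<in>UNIV. \<Sum>b\<in>UNIV. f (fst h @ [a], snd h @ [b]))"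
proof -
  have inj: "inj_on (\<lambda>(h,a,b). (fst h @ [a], snd h @ [b])) (histories m \<times> (UNIV::'a set) \<times> (UNIV::'b set))"
    by (auto simp: inj_on_def)
  have "(\<Sum>h\<in>histories (Suc m). f h) =
      (\<Sum>x\<in>histories m \<times> (UNIV::'a set) \<times> (UNIV::'b set). f (fst (fst x) @ [fst (snd x)], snd (fst x) @ [snd (snd x)]))"
    unfolding histories_Suc by (subst sum.reindex[OF inj]) (simp add: case_prod_beta)
  also have "\<dots> = (\<Sum>h\<in>histories m. \<Sum>ab\<in>(UNIV::'a set) \<times> (UNIV::'b set). f (fst h @ [fst ab], snd h @ [snd ab]))"
    by (simp add: sum.cartesian_product case_prod_beta)
  also have "\<dots> = (\<Sum>h\<in>histories m. \<Sum>a\<in>UNIV. \<Sum>b\<in>UNIV. f (fst h @ [a], snd h @ [b]))"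
    by (simp add: sum.cartesian_product case_prod_beta)
  finally show ?thesis .
qed

lemma rch1_snoc:
  assumes "length ha = length hb"
  shows "rch1 \<sigma> k (ha @ [a]) (hb @ [b]) = rch1 \<sigma> k ha hb * \<sigma> k ha hb a"
proof -
  have "rch1 \<sigma> k (ha @ [a]) (hb @ [b]) = (\<Prod>r<Suc (length ha). \<sigma> k (take r (ha @ [a])) (take r (hb @ [b])) ((ha @ [a]) ! r))"
    unfolding rch1_def by simp
  also have "\<dots> = (\<Prod>r<length ha. \<sigma> k (take r (ha @ [a])) (take r (hb @ [b])) ((ha @ [a]) ! r)) *
      \<sigma> k (take (length ha) (ha @ [a])) (take (length ha) (hb @ [b])) ((ha @ [a]) ! length ha)"
    by (rule prod.lessThan_Suc)
  also have "\<sigma> k (take (length ha) (ha @ [a])) (take (length ha) (hb @ [b])) ((ha @ [a]) ! length ha) = \<sigma> k ha hb a"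
    using assms by (simp add: nth_append)
  also have "(\<Prod>r<length ha. \<sigma> k (take r (ha @ [a])) (take r (hb @ [b])) ((ha @ [a]) ! r)) = rch1 \<sigma> k ha hb"
    unfolding rch1_def using assms by (intro prod.cong) (auto simp: nth_append)
  finally show ?thesis .
qed

lemma rch2_snoc:
  assumes "length ha = length hb"
  shows "rch2 \<tau> l (ha @ [a]) (hb @ [b]) = rch2 \<tau> l ha hb * \<tau> l ha hb b"
proof -
  have "rch2 \<tau> l (ha @ [a]) (hb @ [b]) = (\<Prod>r<Suc (length hb). \<tau> l (take r (ha @ [a])) (take r (hb @ [b])) ((hb @ [b]) ! r))"
    unfolding rch2_def by simp
  also have "\<dots> = (\<Prod>r<length hb. \<tau> l (take r (ha @ [a])) (take r (hb @ [b])) ((hb @ [b]) ! r)) *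
      \<tau> l (take (length hb) (ha @ [a])) (take (length hb) (hb @ [b])) ((hb @ [b]) ! length hb)"
    by (rule prod.lessThan_Suc)
  also have "\<tau> l (take (length hb) (ha @ [a])) (take (length hb) (hb @ [b])) ((hb @ [b]) ! length hb) = \<tau> l ha hb b"
    using assms by (simp add: nth_append)
  also have "(\<Prod>r<length hb. \<tau> l (take r (ha @ [a])) (take r (hb @ [b])) ((hb @ [b]) ! r)) = rch2 \<tau> l ha hb"
    unfolding rch2_def using assms by (intro prod.cong) (auto simp: nth_append)
  finally show ?thesis .
qed

lemma reach_rch:
  assumes "length ha = length hb"
  shows "reach \<sigma> \<tau> k l ha hb = rch1 \<sigma> k ha hb * rch2 \<tau> l ha hb"
  unfolding reach_def rch1_def rch2_def using assms by (simp add: prod.distrib)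

lemma rch1_nonneg:
  assumes "stoch1 n \<sigma>" "length ha = length hb" "length ha \<le> n"
  shows "rch1 \<sigma> k ha hb \<ge> 0"
  unfolding rch1_def using assms unfolding stoch1_def by (intro prod_nonneg) auto

lemma rch2_nonneg:
  assumes "stoch2 n \<tau>" "length ha = length hb" "length ha \<le> n"
  shows "rch2 \<tau> l ha hb \<ge> 0"
  unfolding rch2_def using assms unfolding stoch2_def by (intro prod_nonneg) auto

lemma distr_aux:
  fixes f :: "'a::finite \<Rightarrow> real" and g :: "'b::finite \<Rightarrow> real"
  shows "(\<Sum>a\<in>UNIV. \<Sum>b\<in>UNIV. R * (f a * g b) * (S + c a b)) =
    R * S * (\<Sum>a\<in>UNIV. \<Sum>b\<in>UNIV. f a * g b) + R * (\<Sum>a\<in>UNIV. \<Sum>b\<in>UNIV. f a * g b * c a b)"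
  by (simp add: sum_distrib_left sum.distrib ring_distribs mult_ac)

lemma cond_payoff_stage:
  fixes \<sigma> :: "'k \<Rightarrow> 'a::finite list \<Rightarrow> 'b::finite list \<Rightarrow> 'a \<Rightarrow> real"
  assumes s1: "stoch1 n \<sigma>" and s2: "stoch2 n \<tau>"
  shows "N \<le> n \<Longrightarrow> cond_payoff M N \<sigma> \<tau> k l =
    (\<Sum>m<N. \<Sum>h\<in>histories m. reach \<sigma> \<tau> k l (fst h) (snd h) *
        (\<Sum>a\<in>UNIV. \<Sum>b\<in>UNIV. \<sigma> k (fst h) (snd h) a * \<tau> l (fst h) (snd h) b * M k l a b))"
proof (induction N)
  case 0
  then show ?case unfolding cond_payoff_def by simp
next
  case (Suc N)
  have one: "(\<Sum>a\<in>UNIV. \<Sum>b\<in>UNIV. \<sigma> k (fst h) (snd h) a * \<tau> l (fst h) (snd h) b) = 1"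
    if "h \<in> histories N" for h :: "'a list \<times> 'b list"
  proof -
    have "(\<Sum>a\<in>UNIV. \<Sum>b\<in>UNIV. \<sigma> k (fst h) (snd h) a * \<tau> l (fst h) (snd h) b)
        = (\<Sum>a\<in>UNIV. \<sigma> k (fst h) (snd h) a) * (\<Sum>b\<in>UNIV. \<tau> l (fst h) (snd h) b)"
      by (simp add: sum_product)
    also have "\<dots> = 1" using s1 s2 that Suc.prems unfolding stoch1_def stoch2_def histories_def by auto
    finally show ?thesis .
  qed
  have "cond_payoff M (Suc N) \<sigma> \<tau> k l =
      (\<Sum>h\<in>histories N. \<Sum>a\<in>UNIV. \<Sum>b\<in>UNIV. reach \<sigma> \<tau> k l (fst h @ [a]) (snd h @ [b]) *
          (\<Sum>r<Suc N. M k l ((fst h @ [a]) ! r) ((snd h @ [b]) ! r)))"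
    unfolding cond_payoff_def by (subst sum_histories_Suc) simp
  also have "\<dots> = (\<Sum>h\<in>histories N. \<Sum>a\<in>UNIV. \<Sum>b\<in>UNIV.
        reach \<sigma> \<tau> k l (fst h) (snd h) * (\<sigma> k (fst h) (snd h) a * \<tau> l (fst h) (snd h) b) *
          ((\<Sum>r<N. M k l (fst h ! r) (snd h ! r)) + M k l a b))"
  proof (intro sum.cong refl)
    fix h :: "'a list \<times> 'b list" and a b assume h: "h \<in> histories N"
    then have len: "length (fst h) = N" "length (snd h) = N" unfolding histories_def by auto
    have "reach \<sigma> \<tau> k l (fst h @ [a]) (snd h @ [b]) =
        reach \<sigma> \<tau> k l (fst h) (snd h) * (\<sigma> k (fst h) (snd h) a * \<tau> l (fst h) (snd h) b)"
      using len by (simp add: reach_rch rch1_snoc rch2_snoc)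
    moreover have "(\<Sum>r<Suc N. M k l ((fst h @ [a]) ! r) ((snd h @ [b]) ! r)) =
        (\<Sum>r<N. M k l (fst h ! r) (snd h ! r)) + M k l a b"
      using len by (simp add: nth_append)
    ultimately show "reach \<sigma> \<tau> k l (fst h @ [a]) (snd h @ [b]) *
          (\<Sum>r<Suc N. M k l ((fst h @ [a]) ! r) ((snd h @ [b]) ! r)) =
        reach \<sigma> \<tau> k l (fst h) (snd h) * (\<sigma> k (fst h) (snd h) a * \<tau> l (fst h) (snd h) b) *
          ((\<Sum>r<N. M k l (fst h ! r) (snd h ! r)) + M k l a b)" by simp
  qed
  also have "\<dots> = (\<Sum>h\<in>histories N. reach \<sigma> \<tau> k l (fst h) (snd h) * (\<Sum>r<N. M k l (fst h ! r) (snd h ! r)) *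
          (\<Sum>a\<in>UNIV. \<Sum>b\<in>UNIV. \<sigma> k (fst h) (snd h) a * \<tau> l (fst h) (snd h) b)) +
      (\<Sum>h\<in>histories N. reach \<sigma> \<tau> k l (fst h) (snd h) *
          (\<Sum>a\<in>UNIV. \<Sum>b\<in>UNIV. \<sigma> k (fst h) (snd h) a * \<tau> l (fst h) (snd h) b * M k l a b))"
    by (simp add: sum.distrib[symmetric] distr_aux)
  also have "\<dots> = cond_payoff M N \<sigma> \<tau> k l +
      (\<Sum>h\<in>histories N. reach \<sigma> \<tau> k l (fst h) (snd h) *
          (\<Sum>a\<in>UNIV. \<Sum>b\<in>UNIV. \<sigma> k (fst h) (snd h) a * \<tau> l (fst h) (snd h) b * M k l a b))"
    unfolding cond_payoff_def by (simp add: one)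
  finally show ?case using Suc by simp
qed

lemma reach_sum1:
  fixes \<sigma> :: "'k \<Rightarrow> 'a::finite list \<Rightarrow> 'b::finite list \<Rightarrow> 'a \<Rightarrow> real"
  assumes s1: "stoch1 n \<sigma>" and s2: "stoch2 n \<tau>"
  shows "N \<le> n \<Longrightarrow> (\<Sum>h\<in>histories N. reach \<sigma> \<tau> k l (fst h) (snd h)) = 1"
proof (induction N)
  case 0
  have "(histories 0 :: ('a list \<times> 'b list) set) = {([], [])}" unfolding histories_def by auto
  then show ?case unfolding reach_def by simp
next
  case (Suc N)
  have "(\<Sum>h\<in>histories (Suc N). reach \<sigma> \<tau> k l (fst h) (snd h)) =
      (\<Sum>h\<in>histories N. reach \<sigma> \<tau> k l (fst h) (snd h) *
         ((\<Sum>a\<in>UNIV. \<sigma> k (fst h) (snd h) a) * (\<Sum>b\<in>UNIV. \<tau> l (fst h) (snd h) b)))"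
  proof (subst sum_histories_Suc, intro sum.cong refl)
    fix h :: "'a list \<times> 'b list" assume "h \<in> histories N"
    then have len: "length (fst h) = length (snd h)" unfolding histories_def by auto
    show "(\<Sum>a\<in>UNIV. \<Sum>b\<in>UNIV. reach \<sigma> \<tau> k l (fst (fst h @ [a], snd h @ [b])) (snd (fst h @ [a], snd h @ [b]))) =
      reach \<sigma> \<tau> k l (fst h) (snd h) * ((\<Sum>a\<in>UNIV. \<sigma> k (fst h) (snd h) a) * (\<Sum>b\<in>UNIV. \<tau> l (fst h) (snd h) b))"
    proof -
      have "(\<Sum>a\<in>UNIV. \<Sum>b\<in>UNIV. reach \<sigma> \<tau> k l (fst (fst h @ [a], snd h @ [b])) (snd (fst h @ [a], snd h @ [b])))
        = (\<Sum>a\<in>UNIV. \<Sum>b\<in>UNIV. reach \<sigma> \<tau> k l (fst h) (snd h) * (\<sigma> k (fst h) (snd h) a * \<tau> l (fst h) (snd h) b))"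
        using len by (intro sum.cong refl) (simp add: reach_rch rch1_snoc rch2_snoc mult_ac)
      also have "\<dots> = reach \<sigma> \<tau> k l (fst h) (snd h) * (\<Sum>a\<in>UNIV. \<Sum>b\<in>UNIV. \<sigma> k (fst h) (snd h) a * \<tau> l (fst h) (snd h) b)"
        by (simp only: sum_distrib_left)
      also have "\<dots> = reach \<sigma> \<tau> k l (fst h) (snd h) * ((\<Sum>a\<in>UNIV. \<sigma> k (fst h) (snd h) a) * (\<Sum>b\<in>UNIV. \<tau> l (fst h) (snd h) b))"
        by (simp only: sum_product)
      finally show ?thesis .
    qed
  qed
  also have "\<dots> = (\<Sum>h\<in>histories N. reach \<sigma> \<tau> k l (fst h) (snd h))"
    using s1 s2 Suc.prems unfolding stoch1_def stoch2_def histories_def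
    by (intro sum.cong refl) auto
  finally show ?case using Suc by simp
qed

lemma reach_nonneg:
  assumes "stoch1 n \<sigma>" "stoch2 n \<tau>" "length ha = length hb" "length ha \<le> n"
  shows "reach \<sigma> \<tau> k l ha hb \<ge> 0"
  using assms by (simp add: reach_rch rch1_nonneg rch2_nonneg)

definition Mall :: "('k::finite \<Rightarrow> 'l::finite \<Rightarrow> 'a::finite \<Rightarrow> 'b::finite \<Rightarrow> real) \<Rightarrow> real" where
  "Mall M = (\<Sum>k\<in>UNIV. \<Sum>l\<in>UNIV. \<Sum>a\<in>UNIV. \<Sum>b\<in>UNIV. \<bar>M k l a b\<bar>)"

lemma Mall_ge: "\<bar>M k l a b\<bar> \<le> Mall M"
proof -
  have "\<bar>M k l a b\<bar> \<le> (\<Sum>b\<in>UNIV. \<bar>M k l a b\<bar>)" by (rule member_le_sum) auto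
  also have "\<dots> \<le> (\<Sum>a\<in>UNIV. \<Sum>b\<in>UNIV. \<bar>M k l a b\<bar>)"
    by (rule member_le_sum[where f="\<lambda>a. \<Sum>b\<in>UNIV. \<bar>M k l a b\<bar>"]) (auto intro: sum_nonneg)
  also have "\<dots> \<le> (\<Sum>l\<in>UNIV. \<Sum>a\<in>UNIV. \<Sum>b\<in>UNIV. \<bar>M k l a b\<bar>)"
    by (rule member_le_sum[where f="\<lambda>l. \<Sum>a\<in>UNIV. \<Sum>b\<in>UNIV. \<bar>M k l a b\<bar>"]) (auto intro: sum_nonneg)
  also have "\<dots> \<le> Mall M" unfolding Mall_def
    by (rule member_le_sum[where f="\<lambda>k. \<Sum>l\<in>UNIV. \<Sum>a\<in>UNIV. \<Sum>b\<in>UNIV. \<bar>M k l a b\<bar>"]) (auto intro: sum_nonneg)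
  finally show ?thesis .
qed

lemma cond_payoff_bound:
  fixes \<sigma> :: "'k::finite \<Rightarrow> 'a::finite list \<Rightarrow> 'b::finite list \<Rightarrow> 'a \<Rightarrow> real"
  assumes s1: "stoch1 n \<sigma>" and s2: "stoch2 n \<tau>"
  shows "\<bar>cond_payoff M n \<sigma> \<tau> k (l::'l::finite)\<bar> \<le> real n * Mall M"
proof -
  have "\<bar>cond_payoff M n \<sigma> \<tau> k l\<bar> \<le> (\<Sum>h\<in>histories n. \<bar>reach \<sigma> \<tau> k l (fst h) (snd h) *
         (\<Sum>r<n. M k l (fst h ! r) (snd h ! r))\<bar>)"
    unfolding cond_payoff_def by (rule sum_abs)
  also have "\<dots> \<le> (\<Sum>h\<in>histories n. reach \<sigma> \<tau> k l (fst h) (snd h) * (real n * Mall M))"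
  proof (intro sum_mono)
    fix h :: "'a list \<times> 'b list" assume h: "h \<in> histories n"
    have r: "reach \<sigma> \<tau> k l (fst h) (snd h) \<ge> 0"
      using h s1 s2 by (intro reach_nonneg) (auto simp: histories_def)
    have "\<bar>\<Sum>r<n. M k l (fst h ! r) (snd h ! r)\<bar> \<le> (\<Sum>r<n. \<bar>M k l (fst h ! r) (snd h ! r)\<bar>)" by (rule sum_abs)
    also have "\<dots> \<le> (\<Sum>r<n. Mall M)" by (intro sum_mono Mall_ge)
    finally have "\<bar>\<Sum>r<n. M k l (fst h ! r) (snd h ! r)\<bar> \<le> real n * Mall M" by simp
    then show "\<bar>reach \<sigma> \<tau> k l (fst h) (snd h) * (\<Sum>r<n. M k l (fst h ! r) (snd h ! r))\<bar>
        \<le> reach \<sigma> \<tau> k l (fst h) (snd h) * (real n * Mall M)"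
      using r by (simp add: abs_mult mult_left_mono)
  qed
  also have "\<dots> = real n * Mall M"
    using reach_sum1[OF s1 s2, of n k l] by (simp add: sum_distrib_right[symmetric])
  finally show ?thesis .
qed

lemma simplex_le1: "simplex p \<Longrightarrow> p i \<le> (1::real)"
  unfolding simplex_def by (metis member_le_sum finite UNIV_I)

lemma dual2_payoff_bound:
  assumes "simplex p" "simplex q" "stoch1 n \<sigma>" "stoch2 n \<tau>"
  shows "\<bar>dual2_payoff M n p \<nu> \<sigma> q \<tau>\<bar> \<le> (\<Sum>l\<in>UNIV. \<bar>\<nu> l\<bar>) + real n * Mall M"
proof -
  let ?B = "real n * Mall M"
  have inner: "\<bar>\<nu> l + (\<Sum>k\<in>UNIV. p k * cond_payoff M n \<sigma> \<tau> k l)\<bar> \<le> \<bar>\<nu> l\<bar> + ?B" for l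
  proof -
    have "\<bar>\<Sum>k\<in>UNIV. p k * cond_payoff M n \<sigma> \<tau> k l\<bar> \<le> (\<Sum>k\<in>UNIV. p k * ?B)"
    proof -
      have "\<bar>\<Sum>k\<in>UNIV. p k * cond_payoff M n \<sigma> \<tau> k l\<bar> \<le> (\<Sum>k\<in>UNIV. \<bar>p k * cond_payoff M n \<sigma> \<tau> k l\<bar>)"
        by (rule sum_abs)
      also have "\<dots> \<le> (\<Sum>k\<in>UNIV. p k * ?B)"
        using assms cond_payoff_bound[OF assms(3,4)] unfolding simplex_def
        by (intro sum_mono) (simp add: abs_mult mult_left_mono)
      finally show ?thesis .
    qed
    also have "\<dots> = ?B" using assms(1) unfolding simplex_def by (simp add: sum_distrib_right[symmetric])
    finally show ?thesis by linarith
  qed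
  have "\<bar>dual2_payoff M n p \<nu> \<sigma> q \<tau>\<bar> \<le> (\<Sum>l\<in>UNIV. q l * (\<bar>\<nu> l\<bar> + ?B))"
    unfolding dual2_payoff_def
    apply (rule order_trans[OF sum_abs])
    apply (intro sum_mono)
    using assms(2) inner unfolding simplex_def by (simp add: abs_mult mult_left_mono)
  also have "\<dots> \<le> (\<Sum>l\<in>UNIV. \<bar>\<nu> l\<bar>) + ?B"
  proof -
    have "(\<Sum>l\<in>UNIV. q l * (\<bar>\<nu> l\<bar> + ?B)) = (\<Sum>l\<in>UNIV. q l * \<bar>\<nu> l\<bar>) + ?B"
      using assms(2) unfolding simplex_def by (simp add: ring_distribs sum.distrib sum_distrib_right[symmetric])
    moreover have "(\<Sum>l\<in>UNIV. q l * \<bar>\<nu> l\<bar>) \<le> (\<Sum>l\<in>UNIV. \<bar>\<nu> l\<bar>)"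
      using assms(2) simplex_le1[OF assms(2)] unfolding simplex_def
      by (intro sum_mono) (simp add: mult_left_le_one_le)
    ultimately show ?thesis by simp
  qed
  finally show ?thesis .
qed

definition plan1 :: "nat \<Rightarrow> ('k \<Rightarrow> real) \<Rightarrow> ('k \<Rightarrow> 'a list \<Rightarrow> 'b list \<Rightarrow> 'a \<Rightarrow> real)
    \<Rightarrow> 'k \<Rightarrow> 'a list \<Rightarrow> 'b list \<Rightarrow> 'a \<Rightarrow> real" where
  "plan1 n p \<sigma> k ha hb a = (if length ha = length hb \<and> length ha < n then p k * rch1 \<sigma> k ha hb * \<sigma> k ha hb a else 0)"

definition plan2 :: "nat \<Rightarrow> ('l \<Rightarrow> real) \<Rightarrow> ('l \<Rightarrow> 'a list \<Rightarrow> 'b list \<Rightarrow> 'b \<Rightarrow> real)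
    \<Rightarrow> 'l \<Rightarrow> 'a list \<Rightarrow> 'b list \<Rightarrow> 'b \<Rightarrow> real" where
  "plan2 n q \<tau> l ha hb b = (if length ha = length hb \<and> length ha < n then q l * rch2 \<tau> l ha hb * \<tau> l ha hb b else 0)"

definition GG :: "('k::finite \<Rightarrow> 'l \<Rightarrow> 'a \<Rightarrow> 'b \<Rightarrow> real) \<Rightarrow> ('k \<Rightarrow> 'a list \<Rightarrow> 'b list \<Rightarrow> 'a \<Rightarrow> real)
    \<Rightarrow> 'l \<Rightarrow> 'a list \<Rightarrow> 'b list \<Rightarrow> 'a \<Rightarrow> 'b \<Rightarrow> real" where
  "GG M x l ha hb a b = (\<Sum>k\<in>UNIV. M k l a b * x k ha hb a)"

definition PF :: "('k::finite \<Rightarrow> 'l::finite \<Rightarrow> 'a::finite \<Rightarrow> 'b::finite \<Rightarrow> real) \<Rightarrow> nat \<Rightarrow> ('l \<Rightarrow> real)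
    \<Rightarrow> ('k \<Rightarrow> 'a list \<Rightarrow> 'b list \<Rightarrow> 'a \<Rightarrow> real) \<Rightarrow> ('l \<Rightarrow> 'a list \<Rightarrow> 'b list \<Rightarrow> 'b \<Rightarrow> real) \<Rightarrow> real" where
  "PF M n \<nu> x y = (\<Sum>l\<in>UNIV. \<nu> l * (\<Sum>b\<in>UNIV. y l [] [] b)) +
     (\<Sum>l\<in>UNIV. \<Sum>m<n. \<Sum>h\<in>histories m. \<Sum>a\<in>UNIV. \<Sum>b\<in>UNIV. GG M x l (fst h) (snd h) a b * y l (fst h) (snd h) b)"

lemma swap3: "(\<Sum>a\<in>A. \<Sum>b\<in>B. \<Sum>k\<in>C. f a b k) = (\<Sum>k\<in>C. \<Sum>a\<in>A. \<Sum>b\<in>B. (f a b k :: real))"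
proof -
  have "(\<Sum>a\<in>A. \<Sum>b\<in>B. \<Sum>k\<in>C. f a b k) = (\<Sum>a\<in>A. \<Sum>k\<in>C. \<Sum>b\<in>B. f a b k)"
    by (rule sum.cong[OF refl], rule sum.swap)
  also have "\<dots> = (\<Sum>k\<in>C. \<Sum>a\<in>A. \<Sum>b\<in>B. f a b k)" by (rule sum.swap)
  finally show ?thesis .
qed

lemma swap_mhk: "(\<Sum>m\<in>A. \<Sum>h\<in>B m. \<Sum>k\<in>C. f m h k) = (\<Sum>k\<in>C. \<Sum>m\<in>A. \<Sum>h\<in>B m. (f m h k :: real))"
proof -
  have "(\<Sum>m\<in>A. \<Sum>h\<in>B m. \<Sum>k\<in>C. f m h k) = (\<Sum>m\<in>A. \<Sum>k\<in>C. \<Sum>h\<in>B m. f m h k)"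
    by (rule sum.cong[OF refl], rule sum.swap)
  also have "\<dots> = (\<Sum>k\<in>C. \<Sum>m\<in>A. \<Sum>h\<in>B m. f m h k)" by (rule sum.swap)
  finally show ?thesis .
qed

lemma payoff_PF:
  fixes M :: "'k::finite \<Rightarrow> 'l::finite \<Rightarrow> 'a::finite \<Rightarrow> 'b::finite \<Rightarrow> real"
  assumes n: "1 \<le> n" and s1: "stoch1 n \<sigma>" and s2: "stoch2 n \<tau>"
  shows "dual2_payoff M n p \<nu> \<sigma> q \<tau> = PF M n \<nu> (plan1 n p \<sigma>) (plan2 n q \<tau>)"
proof -
  have root: "(\<Sum>b\<in>UNIV. plan2 n q \<tau> l [] [] b) = q l" for l
    using n s2 unfolding plan2_def rch2_def stoch2_def by (simp add: sum_distrib_left[symmetric])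
  have trm: "(\<Sum>m<n. \<Sum>h\<in>histories m. \<Sum>a\<in>UNIV. \<Sum>b\<in>UNIV.
        GG M (plan1 n p \<sigma>) l (fst h) (snd h) a b * plan2 n q \<tau> l (fst h) (snd h) b)
      = q l * (\<Sum>k\<in>UNIV. p k * cond_payoff M n \<sigma> \<tau> k l)" for l
  proof -
    have "(\<Sum>m<n. \<Sum>h\<in>histories m. \<Sum>a\<in>UNIV. \<Sum>b\<in>UNIV.
        GG M (plan1 n p \<sigma>) l (fst h) (snd h) a b * plan2 n q \<tau> l (fst h) (snd h) b)
      = (\<Sum>m<n. \<Sum>h\<in>histories m. \<Sum>k\<in>UNIV. q l * p k * (reach \<sigma> \<tau> k l (fst h) (snd h) *
          (\<Sum>a\<in>UNIV. \<Sum>b\<in>UNIV. \<sigma> k (fst h) (snd h) a * \<tau> l (fst h) (snd h) b * M k l a b)))"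
    proof (intro sum.cong refl)
      fix m and h :: "'a list \<times> 'b list" assume m: "m \<in> {..<n}" and h: "h \<in> histories m"
      have len: "length (fst h) = length (snd h)" "length (fst h) < n" using m h unfolding histories_def by auto
      have "(\<Sum>a\<in>UNIV. \<Sum>b\<in>UNIV. GG M (plan1 n p \<sigma>) l (fst h) (snd h) a b * plan2 n q \<tau> l (fst h) (snd h) b)
         = (\<Sum>a\<in>UNIV. \<Sum>b\<in>UNIV. \<Sum>k\<in>UNIV. q l * p k * (reach \<sigma> \<tau> k l (fst h) (snd h) *
            (\<sigma> k (fst h) (snd h) a * \<tau> l (fst h) (snd h) b * M k l a b)))"
        unfolding GG_def plan1_def plan2_def using len
        apply (intro sum.cong refl)
        apply (simp add: reach_rch)
        apply (simp only: sum_distrib_right)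
        apply (intro sum.cong refl)
        apply (simp add: mult_ac)
        done
      also have "\<dots> = (\<Sum>k\<in>UNIV. \<Sum>a\<in>UNIV. \<Sum>b\<in>UNIV. q l * p k * (reach \<sigma> \<tau> k l (fst h) (snd h) *
            (\<sigma> k (fst h) (snd h) a * \<tau> l (fst h) (snd h) b * M k l a b)))"
        by (rule swap3)
      also have "\<dots> = (\<Sum>k\<in>UNIV. q l * p k * (reach \<sigma> \<tau> k l (fst h) (snd h) *
          (\<Sum>a\<in>UNIV. \<Sum>b\<in>UNIV. \<sigma> k (fst h) (snd h) a * \<tau> l (fst h) (snd h) b * M k l a b)))"
        by (simp add: sum_distrib_left)
      finally show "(\<Sum>a\<in>UNIV. \<Sum>b\<in>UNIV. GG M (plan1 n p \<sigma>) l (fst h) (snd h) a b * plan2 n q \<tau> l (fst h) (snd h) b)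
         = (\<Sum>k\<in>UNIV. q l * p k * (reach \<sigma> \<tau> k l (fst h) (snd h) *
          (\<Sum>a\<in>UNIV. \<Sum>b\<in>UNIV. \<sigma> k (fst h) (snd h) a * \<tau> l (fst h) (snd h) b * M k l a b)))" .
    qed
    also have "\<dots> = (\<Sum>k\<in>UNIV. q l * p k * (\<Sum>m<n. \<Sum>h\<in>histories m. reach \<sigma> \<tau> k l (fst h) (snd h) *
          (\<Sum>a\<in>UNIV. \<Sum>b\<in>UNIV. \<sigma> k (fst h) (snd h) a * \<tau> l (fst h) (snd h) b * M k l a b)))"
    proof -
      have "(\<Sum>m<n. \<Sum>h\<in>histories m. \<Sum>k\<in>UNIV. q l * p k * (reach \<sigma> \<tau> k l (fst h) (snd h) *
          (\<Sum>a\<in>UNIV. \<Sum>b\<in>UNIV. \<sigma> k (fst h) (snd h) a * \<tau> l (fst h) (snd h) b * M k l a b)))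
        = (\<Sum>k\<in>UNIV. \<Sum>m<n. \<Sum>h\<in>histories m. q l * p k * (reach \<sigma> \<tau> k l (fst h) (snd h) *
          (\<Sum>a\<in>UNIV. \<Sum>b\<in>UNIV. \<sigma> k (fst h) (snd h) a * \<tau> l (fst h) (snd h) b * M k l a b)))"
        by (rule swap_mhk)
      also have "\<dots> = (\<Sum>k\<in>UNIV. q l * p k * (\<Sum>m<n. \<Sum>h\<in>histories m. reach \<sigma> \<tau> k l (fst h) (snd h) *
          (\<Sum>a\<in>UNIV. \<Sum>b\<in>UNIV. \<sigma> k (fst h) (snd h) a * \<tau> l (fst h) (snd h) b * M k l a b)))"
        by (simp only: sum_distrib_left)
      finally show ?thesis .
    qed
    also have "\<dots> = q l * (\<Sum>k\<in>UNIV. p k * cond_payoff M n \<sigma> \<tau> k l)"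
      by (simp only: cond_payoff_stage[OF s1 s2 order_refl] sum_distrib_left mult.assoc)
    finally show ?thesis .
  qed
  show ?thesis unfolding PF_def dual2_payoff_def root trm
    by (simp add: sum.distrib distrib_left mult.commute)
qed


lemma snoc_ex:
  assumes "length ha = length hb" "ha \<noteq> []"
  shows "\<exists>ha' hb' a b. ha = ha' @ [a] \<and> hb = hb' @ [b] \<and> length ha' = length hb'"
proof -
  have "hb \<noteq> []" using assms by auto
  then show ?thesis using assms
    by (metis append_butlast_last_id length_butlast)
qed

lemma snoc_split:
  assumes "length ha = length hb" "ha \<noteq> []"
  obtains ha' hb' a b where "ha = ha' @ [a]" "hb = hb' @ [b]" "length ha' = length hb'"
proof -
  have "hb \<noteq> []" using assms by auto
  then show ?thesis using assms that[of "butlast ha" "last ha" "butlast hb" "last hb"]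
    by (metis append_butlast_last_id length_butlast)
qed

lemma plan1_real:
  assumes p: "\<forall>k. p k \<ge> 0" and s1: "stoch1 n \<sigma>"
  shows "realization_plan1 n p (plan1 n p (\<sigma> :: 'k \<Rightarrow> 'a::finite list \<Rightarrow> 'b list \<Rightarrow> 'a \<Rightarrow> real))"
  unfolding realization_plan1_def
proof (intro allI impI conjI)
  fix k and ha :: "'a list" and hb :: "'b list" and a
  assume len: "length ha = length hb \<and> length ha < n"
  show "0 \<le> plan1 n p \<sigma> k ha hb a" using len p s1 rch1_nonneg[OF s1, of ha hb k]
    unfolding plan1_def stoch1_def by auto
  have sum: "(\<Sum>a\<in>UNIV. plan1 n p \<sigma> k ha hb a) = p k * rch1 \<sigma> k ha hb"
    using len s1 unfolding plan1_def stoch1_def by (simp add: sum_distrib_left[symmetric])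
  show "(\<Sum>a\<in>UNIV. plan1 n p \<sigma> k ha hb a) =
      (if ha = [] then p k else plan1 n p \<sigma> k (butlast ha) (butlast hb) (last ha))"
  proof (cases "ha = []")
    case True then show ?thesis using sum by (simp add: rch1_def)
  next
    case False
    then obtain ha' hb' a' b' where e: "ha = ha' @ [a']" "hb = hb' @ [b']" "length ha' = length hb'"
      using snoc_ex[of ha hb] len \<open>ha \<noteq> []\<close> by blast
    then show ?thesis using sum len False by (simp add: plan1_def rch1_snoc)
  qed
qed

lemma plan2_real:
  assumes q: "\<forall>l. q l \<ge> 0" and s2: "stoch2 n \<tau>"
  shows "realization_plan2 n q (plan2 n q (\<tau> :: 'l \<Rightarrow> 'a list \<Rightarrow> 'b::finite list \<Rightarrow> 'b \<Rightarrow> real))"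
  unfolding realization_plan2_def
proof (intro allI impI conjI)
  fix l and ha :: "'a list" and hb :: "'b list" and b
  assume len: "length ha = length hb \<and> length ha < n"
  show "0 \<le> plan2 n q \<tau> l ha hb b" using len q s2 rch2_nonneg[OF s2, of ha hb l]
    unfolding plan2_def stoch2_def by auto
  have sum: "(\<Sum>b\<in>UNIV. plan2 n q \<tau> l ha hb b) = q l * rch2 \<tau> l ha hb"
    using len s2 unfolding plan2_def stoch2_def by (simp add: sum_distrib_left[symmetric])
  show "(\<Sum>b\<in>UNIV. plan2 n q \<tau> l ha hb b) =
      (if hb = [] then q l else plan2 n q \<tau> l (butlast ha) (butlast hb) (last hb))"
  proof (cases "hb = []")
    case True then show ?thesis using sum by (simp add: rch2_def)
  next
    case False
    then have "ha \<noteq> []" using len by auto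
    then obtain ha' hb' a' b' where e: "ha = ha' @ [a']" "hb = hb' @ [b']" "length ha' = length hb'"
      using snoc_ex[of ha hb] len \<open>ha \<noteq> []\<close> by blast
    then show ?thesis using sum len False by (simp add: plan2_def rch2_snoc)
  qed
qed

definition par1 :: "('k \<Rightarrow> real) \<Rightarrow> ('k \<Rightarrow> 'a list \<Rightarrow> 'b list \<Rightarrow> 'a \<Rightarrow> real) \<Rightarrow> 'k \<Rightarrow> 'a list \<Rightarrow> 'b list \<Rightarrow> real" where
  "par1 p x k ha hb = (if ha = [] then p k else x k (butlast ha) (butlast hb) (last ha))"

definition par2 :: "('l \<Rightarrow> real) \<Rightarrow> ('l \<Rightarrow> 'a list \<Rightarrow> 'b list \<Rightarrow> 'b \<Rightarrow> real) \<Rightarrow> 'l \<Rightarrow> 'a list \<Rightarrow> 'b list \<Rightarrow> real" where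
  "par2 q y l ha hb = (if hb = [] then q l else y l (butlast ha) (butlast hb) (last hb))"


lemma par1_nonneg:
  assumes "realization_plan1 n p x" "\<forall>k. p k \<ge> 0" "length ha = length hb" "length ha < n"
  shows "par1 p x k ha hb \<ge> 0"
proof (cases "ha = []")
  case False
  then obtain ha' hb' a' b' where e: "ha = ha' @ [a']" "hb = hb' @ [b']" "length ha' = length hb'"
    using snoc_ex[of ha hb] assms \<open>ha \<noteq> []\<close> by blast
  then show ?thesis using assms False unfolding par1_def realization_plan1_def by auto
qed (use assms in \<open>auto simp: par1_def\<close>)

lemma par2_nonneg:
  assumes "realization_plan2 n q y" "\<forall>l. q l \<ge> 0" "length ha = length hb" "length ha < n"
  shows "par2 q y l ha hb \<ge> 0"
proof (cases "hb = []")
  case False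
  then have "ha \<noteq> []" using assms by auto
  then obtain ha' hb' a' b' where e: "ha = ha' @ [a']" "hb = hb' @ [b']" "length ha' = length hb'"
    using snoc_ex[of ha hb] assms \<open>ha \<noteq> []\<close> by blast
  then show ?thesis using assms False unfolding par2_def realization_plan2_def by auto
qed (use assms in \<open>auto simp: par2_def\<close>)

lemma strat1_key:
  assumes x: "realization_plan1 n p x" and p: "\<forall>k. p k \<ge> 0"
    and len: "length ha = length hb" "length ha < n"
  shows "par1 p x k ha hb * strategy_of_plan1 p x k ha hb a = x k ha hb (a::'a::finite)"
proof -
  have w0: "par1 p x k ha hb \<ge> 0" by (rule par1_nonneg[OF x p len])
  have sumx: "(\<Sum>a\<in>UNIV. x k ha hb a) = par1 p x k ha hb"
    using x len unfolding realization_plan1_def par1_def by auto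
  have xnn: "\<forall>a. x k ha hb a \<ge> 0" using x len unfolding realization_plan1_def by auto
  show ?thesis
  proof (cases "par1 p x k ha hb > 0")
    case True
    then show ?thesis unfolding strategy_of_plan1_def par1_def[symmetric] Let_def by simp
  next
    case False
    then have "par1 p x k ha hb = 0" using w0 by simp
    then have "x k ha hb a = 0" using sumx xnn sum_nonneg_eq_0_iff[of UNIV "x k ha hb"] by simp
    then show ?thesis using \<open>par1 p x k ha hb = 0\<close> by simp
  qed
qed

lemma strat2_key:
  assumes y: "realization_plan2 n q y" and q: "\<forall>l. q l \<ge> 0"
    and len: "length ha = length hb" "length ha < n"
  shows "par2 q y l ha hb * strategy_of_plan2 q y l ha hb b = y l ha hb (b::'b::finite)"
proof -
  have w0: "par2 q y l ha hb \<ge> 0" by (rule par2_nonneg[OF y q len])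
  have sumy: "(\<Sum>b\<in>UNIV. y l ha hb b) = par2 q y l ha hb"
    using y len unfolding realization_plan2_def par2_def by auto
  have ynn: "\<forall>b. y l ha hb b \<ge> 0" using y len unfolding realization_plan2_def by auto
  show ?thesis
  proof (cases "par2 q y l ha hb > 0")
    case True
    then show ?thesis unfolding strategy_of_plan2_def par2_def[symmetric] Let_def by simp
  next
    case False
    then have "par2 q y l ha hb = 0" using w0 by simp
    then have "y l ha hb b = 0" using sumy ynn sum_nonneg_eq_0_iff[of UNIV "y l ha hb"] by simp
    then show ?thesis using \<open>par2 q y l ha hb = 0\<close> by simp
  qed
qed


lemma strat1_rch:
  assumes x: "realization_plan1 n p x" and p: "\<forall>k. p k \<ge> 0"
  shows "length ha = m \<Longrightarrow> length hb = m \<Longrightarrow> m < n \<Longrightarrow>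
    p k * rch1 (strategy_of_plan1 p x) k ha hb = par1 p x k ha (hb :: 'b list)"
proof (induction m arbitrary: ha hb)
  case 0 then show ?case by (simp add: rch1_def par1_def)
next
  case (Suc m)
  then obtain ha' hb' a' b' where e: "ha = ha' @ [a']" "hb = hb' @ [b']" "length ha' = length hb'"
    using snoc_ex[of ha hb] Suc.prems by fastforce
  have l': "length ha' = m" "length hb' = m" using e Suc.prems by auto
  have "p k * rch1 (strategy_of_plan1 p x) k ha hb =
      (p k * rch1 (strategy_of_plan1 p x) k ha' hb') * strategy_of_plan1 p x k ha' hb' a'"
    using e by (simp add: rch1_snoc)
  also have "\<dots> = par1 p x k ha' hb' * strategy_of_plan1 p x k ha' hb' a'"
    using Suc.IH[OF l'] Suc.prems by simp
  also have "\<dots> = x k ha' hb' a'" using strat1_key[OF x p] e l' Suc.prems by simp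
  also have "\<dots> = par1 p x k ha hb" using e by (simp add: par1_def)
  finally show ?case .
qed

lemma strat2_rch:
  assumes y: "realization_plan2 n q y" and q: "\<forall>l. q l \<ge> 0"
  shows "length ha = m \<Longrightarrow> length hb = m \<Longrightarrow> m < n \<Longrightarrow>
    q l * rch2 (strategy_of_plan2 q y) l ha hb = par2 q y l (ha :: 'a list) hb"
proof (induction m arbitrary: ha hb)
  case 0 then show ?case by (simp add: rch2_def par2_def)
next
  case (Suc m)
  then obtain ha' hb' a' b' where e: "ha = ha' @ [a']" "hb = hb' @ [b']" "length ha' = length hb'"
    using snoc_ex[of ha hb] Suc.prems by fastforce
  have l': "length ha' = m" "length hb' = m" using e Suc.prems by auto
  have "q l * rch2 (strategy_of_plan2 q y) l ha hb =
      (q l * rch2 (strategy_of_plan2 q y) l ha' hb') * strategy_of_plan2 q y l ha' hb' b'"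
    using e by (simp add: rch2_snoc)
  also have "\<dots> = par2 q y l ha' hb' * strategy_of_plan2 q y l ha' hb' b'"
    using Suc.IH[OF l'] Suc.prems by simp
  also have "\<dots> = y l ha' hb' b'" using strat2_key[OF y q] e l' Suc.prems by simp
  also have "\<dots> = par2 q y l ha hb" using e by (simp add: par2_def)
  finally show ?case .
qed

lemma plan1_recover:
  assumes x: "realization_plan1 n p x" and p: "\<forall>k. p k \<ge> 0"
    and len: "length ha = length hb" "length ha < n"
  shows "plan1 n p (strategy_of_plan1 p x) k ha hb a = x k ha hb (a::'a::finite)"
  using strat1_rch[OF x p refl len(1)[symmetric], of k] len strat1_key[OF x p len]
  unfolding plan1_def by simp

lemma plan2_recover:
  assumes y: "realization_plan2 n q y" and q: "\<forall>l. q l \<ge> 0"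
    and len: "length ha = length hb" "length ha < n"
  shows "plan2 n q (strategy_of_plan2 q y) l ha hb b = y l ha hb (b::'b::finite)"
  using strat2_rch[OF y q len(1) refl, of l] len strat2_key[OF y q len]
  unfolding plan2_def by simp


lemma strat1_stoch:
  assumes x: "realization_plan1 n p x" and p: "\<forall>k. p k \<ge> 0"
  shows "stoch1 n (strategy_of_plan1 p (x :: 'k \<Rightarrow> 'a list \<Rightarrow> 'b list \<Rightarrow> 'a::finite \<Rightarrow> real))"
  unfolding stoch1_def
proof (intro allI impI conjI)
  fix k and ha :: "'a list" and hb :: "'b list" and a assume len: "length ha = length hb \<and> length ha < n"
  have w0: "par1 p x k ha hb \<ge> 0" using par1_nonneg[OF x p] len by auto
  have sumx: "(\<Sum>a\<in>UNIV. x k ha hb a) = par1 p x k ha hb"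
    using x len unfolding realization_plan1_def par1_def by auto
  have xnn: "\<forall>a. x k ha hb a \<ge> 0" using x len unfolding realization_plan1_def by auto
  show "0 \<le> strategy_of_plan1 p x k ha hb a"
    unfolding strategy_of_plan1_def par1_def[symmetric] Let_def using w0 xnn by auto
  show "(\<Sum>a\<in>UNIV. strategy_of_plan1 p x k ha hb a) = 1"
  proof (cases "par1 p x k ha hb > 0")
    case True
    then show ?thesis unfolding strategy_of_plan1_def par1_def[symmetric] Let_def
      using sumx by (simp add: sum_divide_distrib[symmetric])
  next
    case False
    then show ?thesis unfolding strategy_of_plan1_def par1_def[symmetric] Let_def by simp
  qed
qed

lemma strat2_stoch:
  assumes y: "realization_plan2 n q y" and q: "\<forall>l. q l \<ge> 0"
  shows "stoch2 n (strategy_of_plan2 q (y :: 'l \<Rightarrow> 'a list \<Rightarrow> 'b list \<Rightarrow> 'b::finite \<Rightarrow> real))"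
  unfolding stoch2_def
proof (intro allI impI conjI)
  fix l and ha :: "'a list" and hb :: "'b list" and b assume len: "length ha = length hb \<and> length ha < n"
  have w0: "par2 q y l ha hb \<ge> 0" using par2_nonneg[OF y q] len by auto
  have sumy: "(\<Sum>b\<in>UNIV. y l ha hb b) = par2 q y l ha hb"
    using y len unfolding realization_plan2_def par2_def by auto
  have ynn: "\<forall>b. y l ha hb b \<ge> 0" using y len unfolding realization_plan2_def by auto
  show "0 \<le> strategy_of_plan2 q y l ha hb b"
    unfolding strategy_of_plan2_def par2_def[symmetric] Let_def using w0 ynn by auto
  show "(\<Sum>b\<in>UNIV. strategy_of_plan2 q y l ha hb b) = 1"
  proof (cases "par2 q y l ha hb > 0")
    case True
    then show ?thesis unfolding strategy_of_plan2_def par2_def[symmetric] Let_def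
      using sumy by (simp add: sum_divide_distrib[symmetric])
  next
    case False
    then show ?thesis unfolding strategy_of_plan2_def par2_def[symmetric] Let_def by simp
  qed
qed

lemma PF_cong:
  assumes "\<forall>k ha hb a. length ha = length hb \<and> length ha < n \<longrightarrow> x k ha hb a = x' k ha hb a"
    and "\<forall>l ha hb b. length ha = length hb \<and> length ha < n \<longrightarrow> y l ha hb b = y' l ha hb b"
    and "1 \<le> n"
  shows "PF M n \<nu> x y = PF M n \<nu> x' y'"
proof -
  have r: "y l [] [] b = y' l [] [] b" for l b using assms by auto
  have "GG M x l (fst h) (snd h) a b * y l (fst h) (snd h) b = GG M x' l (fst h) (snd h) a b * y' l (fst h) (snd h) b"
    if "h \<in> histories m" "m < n" for l m h a b
    using that assms unfolding GG_def histories_def by auto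
  then show ?thesis unfolding PF_def using r by (intro arg_cong2[where f="(+)"] sum.cong refl) auto
qed


definition cpar :: "('l \<Rightarrow> real) \<Rightarrow> ('l \<Rightarrow> 'a list \<Rightarrow> 'b list \<Rightarrow> 'a \<Rightarrow> 'b \<Rightarrow> real) \<Rightarrow> 'l \<Rightarrow> 'a list \<Rightarrow> 'b list \<Rightarrow> real" where
  "cpar u0 u l ha hb = (if ha = [] then u0 l else u l (butlast ha) (butlast hb) (last ha) (last hb))"

definition slack :: "('k::finite \<Rightarrow> 'l \<Rightarrow> 'a::finite \<Rightarrow> 'b \<Rightarrow> real) \<Rightarrow> ('k \<Rightarrow> 'a list \<Rightarrow> 'b list \<Rightarrow> 'a \<Rightarrow> real)
   \<Rightarrow> ('l \<Rightarrow> 'a list \<Rightarrow> 'b list \<Rightarrow> 'a \<Rightarrow> 'b \<Rightarrow> real) \<Rightarrow> ('l \<Rightarrow> real) \<Rightarrow> 'l \<Rightarrow> 'a list \<Rightarrow> 'b list \<Rightarrow> 'b \<Rightarrow> real" where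
  "slack M x u u0 l ha hb b = (\<Sum>a\<in>UNIV. GG M x l ha hb a b + u l ha hb a b) - cpar u0 u l ha hb"

lemma aux_slack:
  fixes y :: "'b::finite \<Rightarrow> real" and G U :: "'a::finite \<Rightarrow> 'b \<Rightarrow> real"
  shows "(\<Sum>b\<in>UNIV. y b * ((\<Sum>a\<in>UNIV. G a b + U a b) - c)) =
    (\<Sum>a\<in>UNIV. \<Sum>b\<in>UNIV. G a b * y b) + (\<Sum>a\<in>UNIV. \<Sum>b\<in>UNIV. y b * U a b) - (\<Sum>b\<in>UNIV. y b * c)"
proof -
  have e1: "(\<Sum>a\<in>UNIV. \<Sum>b\<in>UNIV. G a b * y b) = (\<Sum>b\<in>UNIV. \<Sum>a\<in>UNIV. y b * G a b)"
    by (subst sum.swap) (simp add: mult.commute)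
  have e2: "(\<Sum>a\<in>UNIV. \<Sum>b\<in>UNIV. y b * U a b) = (\<Sum>b\<in>UNIV. \<Sum>a\<in>UNIV. y b * U a b)"
    by (rule sum.swap)
  show ?thesis unfolding e1 e2
    by (simp add: sum.distrib sum_subtractf right_diff_distrib distrib_left sum_distrib_left)
qed

lemma slack_identity:
  fixes M :: "'k::finite \<Rightarrow> 'l::finite \<Rightarrow> 'a::finite \<Rightarrow> 'b::finite \<Rightarrow> real"
  assumes n: "1 \<le> n" and y: "realization_plan2 n q y"
    and u: "\<forall>l ha hb a b. length ha = n - 1 \<and> length hb = n - 1 \<longrightarrow> u l ha hb a b = 0"
  shows "(\<Sum>m<n. \<Sum>h\<in>histories m. \<Sum>a\<in>UNIV. \<Sum>b\<in>UNIV. GG M x l (fst h) (snd h) a b * y l (fst h) (snd h) b)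
    = (\<Sum>b\<in>UNIV. y l [] [] b) * uz l
      + (\<Sum>m<n. \<Sum>h\<in>histories m. \<Sum>b\<in>UNIV. y l (fst h) (snd h) b * slack M x u uz l (fst h) (snd h) b)"
proof -
  define T where "T m = (\<Sum>h\<in>histories m. \<Sum>a\<in>UNIV. \<Sum>b\<in>UNIV. GG M x l (fst h) (snd h) a b * y l (fst h) (snd h) b)" for m
  define Psi where "Psi m = (\<Sum>h\<in>histories m. \<Sum>a\<in>UNIV. \<Sum>b\<in>UNIV. y l (fst h) (snd h) b * u l (fst h) (snd h) a b)" for m
  define C where "C m = (\<Sum>h\<in>histories m. \<Sum>b\<in>UNIV. y l (fst h) (snd h) b * cpar uz u l (fst h) (snd h))" for m
  define S where "S m = (\<Sum>h\<in>histories m. \<Sum>b\<in>UNIV. y l (fst h) (snd h) b * slack M x u uz l (fst h) (snd h) b)" for m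
  have TS: "S m = T m + Psi m - C m" for m
  proof -
    have "S m = (\<Sum>h\<in>histories m. (\<Sum>a\<in>UNIV. \<Sum>b\<in>UNIV. GG M x l (fst h) (snd h) a b * y l (fst h) (snd h) b)
        + (\<Sum>a\<in>UNIV. \<Sum>b\<in>UNIV. y l (fst h) (snd h) b * u l (fst h) (snd h) a b)
        - (\<Sum>b\<in>UNIV. y l (fst h) (snd h) b * cpar uz u l (fst h) (snd h)))"
      unfolding S_def slack_def by (intro sum.cong refl aux_slack)
    also have "\<dots> = T m + Psi m - C m"
      unfolding T_def Psi_def C_def by (simp only: sum_subtractf sum.distrib)
    finally show ?thesis .
  qed
  have C0: "C 0 = (\<Sum>b\<in>UNIV. y l [] [] b) * uz l"
  proof -
    have "(histories 0 :: ('a list \<times> 'b list) set) = {([], [])}" unfolding histories_def by auto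
    then show ?thesis unfolding C_def cpar_def by (simp add: sum_distrib_right)
  qed
  have CS: "C (Suc m) = Psi m" if "Suc m < n" for m
  proof -
    have "C (Suc m) = (\<Sum>h\<in>histories m. \<Sum>a\<in>UNIV. \<Sum>b\<in>UNIV.
        (\<Sum>b'\<in>UNIV. y l (fst h @ [a]) (snd h @ [b]) b') * u l (fst h) (snd h) a b)"
      unfolding C_def cpar_def
      by (subst sum_histories_Suc) (simp add: sum_distrib_right)
    also have "\<dots> = Psi m" unfolding Psi_def
    proof (intro sum.cong refl)
      fix h :: "'a list \<times> 'b list" and a b assume h: "h \<in> histories m"
      have "(\<Sum>b'\<in>UNIV. y l (fst h @ [a]) (snd h @ [b]) b') = y l (fst h) (snd h) b"
        using y h that unfolding realization_plan2_def histories_def by auto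
      then show "(\<Sum>b'\<in>UNIV. y l (fst h @ [a]) (snd h @ [b]) b') * u l (fst h) (snd h) a b
          = y l (fst h) (snd h) b * u l (fst h) (snd h) a b" by simp
    qed
    finally show ?thesis .
  qed
  have Pn: "Psi (n - 1) = 0" unfolding Psi_def using u by (intro sum.neutral) (auto simp: histories_def)
  have tele: "1 \<le> j \<Longrightarrow> j \<le> n \<Longrightarrow> (\<Sum>m<j. Psi m - C m) = Psi (j - 1) - C 0" for j
  proof (induction j)
    case 0 then show ?case by simp
  next
    case (Suc j)
    show ?case
    proof (cases "j = 0")
      case True then show ?thesis by simp
    next
      case False
      then have "(\<Sum>m<j. Psi m - C m) = Psi (j - 1) - C 0" using Suc by simp
      moreover have "C j = Psi (j - 1)" using CS[of "j - 1"] False Suc.prems by simp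
      ultimately show ?thesis by simp
    qed
  qed
  have "(\<Sum>m<n. S m) = (\<Sum>m<n. T m) + (\<Sum>m<n. Psi m - C m)"
    unfolding TS by (simp add: sum.distrib[symmetric] algebra_simps)
  also have "(\<Sum>m<n. Psi m - C m) = - C 0" using tele[OF n order_refl] Pn by simp
  finally show ?thesis unfolding T_def[symmetric] S_def[symmetric] C0[symmetric] by simp
qed

lemma root_y:
  assumes "realization_plan2 n q y" "1 \<le> n"
  shows "(\<Sum>b\<in>UNIV. y l [] [] b) = q l"
  using assms unfolding realization_plan2_def by auto

lemma PF_split:
  fixes M :: "'k::finite \<Rightarrow> 'l::finite \<Rightarrow> 'a::finite \<Rightarrow> 'b::finite \<Rightarrow> real"
  assumes n: "1 \<le> n" and y: "realization_plan2 n q y"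
    and u: "\<forall>l ha hb a b. length ha = n - 1 \<and> length hb = n - 1 \<longrightarrow> u l ha hb a b = 0"
  shows "PF M n \<nu> x y = (\<Sum>l\<in>UNIV. q l * (\<nu> l + uz l)
      + (\<Sum>m<n. \<Sum>h\<in>histories m. \<Sum>b\<in>UNIV. y l (fst h) (snd h) b * slack M x u uz l (fst h) (snd h) b))"
proof -
  have "PF M n \<nu> x y = (\<Sum>l\<in>UNIV. \<nu> l * q l) + (\<Sum>l\<in>UNIV. q l * uz l
      + (\<Sum>m<n. \<Sum>h\<in>histories m. \<Sum>b\<in>UNIV. y l (fst h) (snd h) b * slack M x u uz l (fst h) (snd h) b))"
    unfolding PF_def slack_identity[OF n y u, where uz=uz] root_y[OF y n] by simp
  then show ?thesis by (simp add: sum.distrib distrib_left mult.commute add.assoc)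
qed

lemma slack_nonneg:
  fixes M :: "'k::finite \<Rightarrow> 'l::finite \<Rightarrow> 'a::finite \<Rightarrow> 'b::finite \<Rightarrow> real"
  assumes lp: "lp2_feasible M n p \<nu> x u u0 ut" and h: "h \<in> histories m" and m: "m < n"
  shows "slack M x u u0 l (fst h) (snd h) b \<ge> 0"
proof -
  obtain ha hb where hh: "h = (ha, hb)" "length ha = m" "length hb = m" using h unfolding histories_def by auto
  show ?thesis
  proof (cases "ha = []")
    case True
    then have "hb = []" using hh by auto
    then show ?thesis using lp True hh unfolding lp2_feasible_def slack_def cpar_def GG_def by auto
  next
    case False
    then obtain ha' hb' as bs where e: "ha = ha' @ [as]" "hb = hb' @ [bs]" "length ha' = length hb'"
      using snoc_ex[of ha hb] hh by auto
    have c: "1 \<le> m \<and> m \<le> n - 1 \<and> length ha' = m - 1 \<and> length hb' = m - 1" using e hh m by auto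
    have "(\<Sum>a\<in>UNIV. (\<Sum>k\<in>UNIV. M k l a b * x k (ha' @ [as]) (hb' @ [bs]) a)
                     + u l (ha' @ [as]) (hb' @ [bs]) a b) \<ge> u l ha' hb' as bs"
      using lp c unfolding lp2_feasible_def by blast
    then show ?thesis using e hh unfolding slack_def cpar_def GG_def by simp
  qed
qed

lemma lp_lower:
  fixes M :: "'k::finite \<Rightarrow> 'l::finite \<Rightarrow> 'a::finite \<Rightarrow> 'b::finite \<Rightarrow> real"
  assumes n: "1 \<le> n" and lp: "lp2_feasible M n p \<nu> x u u0 ut"
    and y: "realization_plan2 n q y" and q: "simplex q"
  shows "PF M n \<nu> x y \<ge> ut"
proof -
  have u: "\<forall>l ha hb a b. length ha = n - 1 \<and> length hb = n - 1 \<longrightarrow> u l ha hb a b = 0"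
    using lp unfolding lp2_feasible_def by blast
  have "ut = (\<Sum>l\<in>UNIV. q l * ut)" using q unfolding simplex_def by (simp add: sum_distrib_right[symmetric])
  also have "\<dots> \<le> (\<Sum>l\<in>UNIV. q l * (\<nu> l + u0 l)
      + (\<Sum>m<n. \<Sum>h\<in>histories m. \<Sum>b\<in>UNIV. y l (fst h) (snd h) b * slack M x u u0 l (fst h) (snd h) b))"
  proof (intro sum_mono add_increasing2)
    fix l
    show "q l * ut \<le> q l * (\<nu> l + u0 l)"
      using q lp unfolding simplex_def lp2_feasible_def by (intro mult_left_mono) (auto simp: add.commute)
    show "0 \<le> (\<Sum>m<n. \<Sum>h\<in>histories m. \<Sum>b\<in>UNIV. y l (fst h) (snd h) b * slack M x u u0 l (fst h) (snd h) b)"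
    proof (intro sum_nonneg mult_nonneg_nonneg)
      fix m and h :: "'a list \<times> 'b list" and b assume m: "m \<in> {..<n}" and h: "h \<in> histories m"
      show "0 \<le> y l (fst h) (snd h) b" using y m h unfolding realization_plan2_def histories_def by auto
      show "0 \<le> slack M x u u0 l (fst h) (snd h) b" using slack_nonneg[OF lp h] m by auto
    qed
  qed
  also have "\<dots> = PF M n \<nu> x y" using PF_split[OF n y u, where M=M and \<nu>=\<nu> and x=x and uz=u0] by simp
  finally show ?thesis .
qed

fun Dr :: "('k::finite \<Rightarrow> 'l \<Rightarrow> 'a::finite \<Rightarrow> 'b::finite \<Rightarrow> real) \<Rightarrow> ('k \<Rightarrow> 'a list \<Rightarrow> 'b list \<Rightarrow> 'a \<Rightarrow> real)
    \<Rightarrow> nat \<Rightarrow> 'l \<Rightarrow> 'a list \<Rightarrow> 'b list \<Rightarrow> real" where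
  "Dr M x 0 l ha hb = Min (range (\<lambda>b. \<Sum>a\<in>UNIV. GG M x l ha hb a b))"
| "Dr M x (Suc d) l ha hb = Min (range (\<lambda>b. \<Sum>a\<in>UNIV. GG M x l ha hb a b + Dr M x d l (ha @ [a]) (hb @ [b])))"

definition uDP :: "('k::finite \<Rightarrow> 'l \<Rightarrow> 'a::finite \<Rightarrow> 'b::finite \<Rightarrow> real) \<Rightarrow> ('k \<Rightarrow> 'a list \<Rightarrow> 'b list \<Rightarrow> 'a \<Rightarrow> real)
    \<Rightarrow> nat \<Rightarrow> 'l \<Rightarrow> 'a list \<Rightarrow> 'b list \<Rightarrow> 'a \<Rightarrow> 'b \<Rightarrow> real" where
  "uDP M x n l ha hb a b = (if Suc (length ha) < n then Dr M x (n - 2 - length ha) l (ha @ [a]) (hb @ [b]) else 0)"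

definition u0DP :: "('k::finite \<Rightarrow> 'l \<Rightarrow> 'a::finite \<Rightarrow> 'b::finite \<Rightarrow> real) \<Rightarrow> ('k \<Rightarrow> 'a list \<Rightarrow> 'b list \<Rightarrow> 'a \<Rightarrow> real)
    \<Rightarrow> nat \<Rightarrow> 'l \<Rightarrow> real" where
  "u0DP M x n l = Dr M x (n - 1) l [] []"

lemma Dr_eq:
  assumes "length ha < n"
  shows "Dr M x (n - 1 - length ha) l ha hb = Min (range (\<lambda>b. \<Sum>a\<in>UNIV. GG M x l ha hb a b + uDP M x n l ha hb a b))"
proof (cases "Suc (length ha) < n")
  case True
  then have "n - 1 - length ha = Suc (n - 2 - length ha)" by simp
  then show ?thesis using True unfolding uDP_def by simp
next
  case False
  then have "n - 1 - length ha = 0" using assms by simp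
  then show ?thesis using False unfolding uDP_def by simp
qed

lemma cpar_DP:
  assumes "length ha = length hb" "length ha < n"
  shows "cpar (u0DP M x n) (uDP M x n) l ha hb = Dr M x (n - 1 - length ha) l ha hb"
proof (cases "ha = []")
  case True
  then have "hb = []" using assms by simp
  then show ?thesis using True unfolding cpar_def u0DP_def by simp
next
  case False
  then obtain ha' hb' as bs where e: "ha = ha' @ [as]" "hb = hb' @ [bs]" "length ha' = length hb'"
    using snoc_ex[of ha hb] assms by auto
  have "Suc (length ha') < n" using e assms by simp
  moreover have "n - 2 - length ha' = n - 1 - length ha" using e assms by simp
  ultimately show ?thesis using e unfolding cpar_def uDP_def by simp
qed

lemma slack_DP:
  assumes "length ha = length hb" "length ha < n"
  shows "slack M x (uDP M x n) (u0DP M x n) l ha hb b =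
    (\<Sum>a\<in>UNIV. GG M x l ha hb a b + uDP M x n l ha hb a b)
     - Min (range (\<lambda>b. \<Sum>a\<in>UNIV. GG M x l ha hb a b + uDP M x n l ha hb a b))"
  unfolding slack_def cpar_DP[OF assms] Dr_eq[OF assms(2)] ..

lemma lp_DP:
  fixes M :: "'k::finite \<Rightarrow> 'l::finite \<Rightarrow> 'a::finite \<Rightarrow> 'b::finite \<Rightarrow> real"
  assumes n: "1 \<le> n" and x: "realization_plan1 n p x" and ut: "\<forall>l. ut \<le> u0DP M x n l + \<nu> l"
  shows "lp2_feasible M n p \<nu> x (uDP M x n) (u0DP M x n) ut"
  unfolding lp2_feasible_def
proof (intro conjI allI impI)
  show "realization_plan1 n p x" by (rule x)
  fix l
  show "u0DP M x n l + \<nu> l \<ge> ut" using ut by auto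
  fix ha :: "'a list" and hb :: "'b list" and a b
  assume "length ha = n - 1 \<and> length hb = n - 1"
  then show "uDP M x n l ha hb a b = 0" unfolding uDP_def using n by auto
next
  fix l b
  have "u0DP M x n l = Min (range (\<lambda>b. \<Sum>a\<in>UNIV. GG M x l [] [] a b + uDP M x n l [] [] a b))"
    using Dr_eq[of "[]::'a list" n M x l "[]::'b list"] n unfolding u0DP_def by simp
  also have "\<dots> \<le> (\<Sum>a\<in>UNIV. GG M x l [] [] a b + uDP M x n l [] [] a b)" by (rule Min_le) auto
  finally show "(\<Sum>a\<in>UNIV. (\<Sum>k\<in>UNIV. M k l a b * x k [] [] a) + uDP M x n l [] [] a b) \<ge> u0DP M x n l"
    unfolding GG_def .
next
  fix s l and ha :: "'a list" and hb :: "'b list" and as bs b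
  assume c: "1 \<le> s \<and> s \<le> n - 1 \<and> length ha = s - 1 \<and> length hb = s - 1"
  have len: "length (ha @ [as]) = length (hb @ [bs])" "length (ha @ [as]) < n" using c by auto
  have "uDP M x n l ha hb as bs = cpar (u0DP M x n) (uDP M x n) l (ha @ [as]) (hb @ [bs])"
    unfolding cpar_def by simp
  also have "\<dots> = Min (range (\<lambda>b. \<Sum>a\<in>UNIV. GG M x l (ha @ [as]) (hb @ [bs]) a b + uDP M x n l (ha @ [as]) (hb @ [bs]) a b))"
    unfolding cpar_DP[OF len] Dr_eq[OF len(2)] ..
  also have "\<dots> \<le> (\<Sum>a\<in>UNIV. GG M x l (ha @ [as]) (hb @ [bs]) a b + uDP M x n l (ha @ [as]) (hb @ [bs]) a b)"
    by (rule Min_le) auto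
  finally show "(\<Sum>a\<in>UNIV. (\<Sum>k\<in>UNIV. M k l a b * x k (ha @ [as]) (hb @ [bs]) a)
                     + uDP M x n l (ha @ [as]) (hb @ [bs]) a b) \<ge> uDP M x n l ha hb as bs"
    unfolding GG_def .
qed

definition beta :: "('k::finite \<Rightarrow> 'l \<Rightarrow> 'a::finite \<Rightarrow> 'b::finite \<Rightarrow> real) \<Rightarrow> ('k \<Rightarrow> 'a list \<Rightarrow> 'b list \<Rightarrow> 'a \<Rightarrow> real)
    \<Rightarrow> nat \<Rightarrow> 'l \<Rightarrow> 'a list \<Rightarrow> 'b list \<Rightarrow> 'b" where
  "beta M x n l ha hb = (SOME b. (\<Sum>a\<in>UNIV. GG M x l ha hb a b + uDP M x n l ha hb a b)
      = Min (range (\<lambda>b. \<Sum>a\<in>UNIV. GG M x l ha hb a b + uDP M x n l ha hb a b)))"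

lemma beta_min:
  "(\<Sum>a\<in>UNIV. GG M x l ha hb a (beta M x n l ha hb) + uDP M x n l ha hb a (beta M x n l ha hb))
      = Min (range (\<lambda>b. \<Sum>a\<in>UNIV. GG M x l ha hb a b + uDP M x n l ha hb a b))"
proof -
  have "Min (range (\<lambda>b. \<Sum>a\<in>UNIV. GG M x l ha hb a b + uDP M x n l ha hb a b))
      \<in> range (\<lambda>b. \<Sum>a\<in>UNIV. GG M x l ha hb a b + uDP M x n l ha hb a b)"
    by (rule Min_in) auto
  then obtain b0 where "Min (range (\<lambda>b. \<Sum>a\<in>UNIV. GG M x l ha hb a b + uDP M x n l ha hb a b))
      = (\<Sum>a\<in>UNIV. GG M x l ha hb a b0 + uDP M x n l ha hb a b0)" by (rule rangeE)
  then have P: "(\<Sum>a\<in>UNIV. GG M x l ha hb a b0 + uDP M x n l ha hb a b0)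
      = Min (range (\<lambda>b. \<Sum>a\<in>UNIV. GG M x l ha hb a b + uDP M x n l ha hb a b))" by (rule sym)
  show ?thesis unfolding beta_def
    by (rule someI[where P="\<lambda>b. (\<Sum>a\<in>UNIV. GG M x l ha hb a b + uDP M x n l ha hb a b)
      = Min (range (\<lambda>b. \<Sum>a\<in>UNIV. GG M x l ha hb a b + uDP M x n l ha hb a b))", OF P])
qed

definition tauG :: "('k::finite \<Rightarrow> 'l \<Rightarrow> 'a::finite \<Rightarrow> 'b::finite \<Rightarrow> real) \<Rightarrow> ('k \<Rightarrow> 'a list \<Rightarrow> 'b list \<Rightarrow> 'a \<Rightarrow> real)
    \<Rightarrow> nat \<Rightarrow> 'l \<Rightarrow> 'a list \<Rightarrow> 'b list \<Rightarrow> 'b \<Rightarrow> real" where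
  "tauG M x n l ha hb b = (if b = beta M x n l ha hb then 1 else 0)"

lemma tauG_stoch: "stoch2 n (tauG M x n)"
  unfolding stoch2_def tauG_def by auto

lemma greedy_value:
  fixes M :: "'k::finite \<Rightarrow> 'l::finite \<Rightarrow> 'a::finite \<Rightarrow> 'b::finite \<Rightarrow> real"
  assumes n: "1 \<le> n"
  shows "PF M n \<nu> x (plan2 n (\<lambda>l. if l = l0 then 1 else 0) (tauG M x n)) = \<nu> l0 + u0DP M x n l0"
proof -
  let ?q = "\<lambda>l. if l = l0 then 1 else (0::real)"
  let ?y = "plan2 n ?q (tauG M x n)"
  have y: "realization_plan2 n ?q ?y" by (rule plan2_real) (auto intro: tauG_stoch)
  have u: "\<forall>l ha hb a b. length ha = n - 1 \<and> length hb = n - 1 \<longrightarrow> uDP M x n l ha hb a b = 0"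
    unfolding uDP_def using n by auto
  have z: "?y l (fst h) (snd h) b * slack M x (uDP M x n) (u0DP M x n) l (fst h) (snd h) b = 0"
    if "h \<in> histories m" "m < n" for l m h b
  proof (cases "b = beta M x n l (fst h) (snd h)")
    case True
    have len: "length (fst h) = length (snd h)" "length (fst h) < n" using that unfolding histories_def by auto
    show ?thesis unfolding slack_DP[OF len] True beta_min by simp
  next
    case False
    then show ?thesis unfolding plan2_def tauG_def by simp
  qed
  have zz: "(\<Sum>m<n. \<Sum>h\<in>histories m. \<Sum>b\<in>UNIV. ?y l (fst h) (snd h) b * slack M x (uDP M x n) (u0DP M x n) l (fst h) (snd h) b) = 0" for l
    using z by (intro sum.neutral ballI) auto
  have "PF M n \<nu> x ?y = (\<Sum>l\<in>UNIV. ?q l * (\<nu> l + u0DP M x n l))"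
    unfolding PF_split[OF n y u, where uz="u0DP M x n"] zz by simp
  also have "\<dots> = (\<Sum>l\<in>UNIV. if l = l0 then \<nu> l + u0DP M x n l else 0)" by (intro sum.cong) auto
  also have "\<dots> = \<nu> l0 + u0DP M x n l0" by simp
  finally show ?thesis .
qed


definition cur :: "('k \<times> 'a list \<times> 'b list \<times> 'a \<Rightarrow> real) \<Rightarrow> 'k \<Rightarrow> 'a list \<Rightarrow> 'b list \<Rightarrow> 'a \<Rightarrow> real" where
  "cur xu k ha hb a = xu (k, ha, hb, a)"

definition dom4 :: "nat \<Rightarrow> 'k \<times> 'a list \<times> 'b list \<times> 'c \<Rightarrow> bool" where
  "dom4 n i = (length (fst (snd i)) = length (fst (snd (snd i))) \<and> length (fst (snd i)) < n)"

definition X0 :: "nat \<Rightarrow> ('k \<Rightarrow> real) \<Rightarrow> ('k \<Rightarrow> 'a list \<Rightarrow> 'b list \<Rightarrow> 'a::finite \<Rightarrow> real) set" where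
  "X0 n p = {x. realization_plan1 n p x \<and>
     (\<forall>k ha hb a. \<not> (length ha = length hb \<and> length ha < n) \<longrightarrow> x k ha hb a = 0)}"

definition XU :: "nat \<Rightarrow> ('k \<Rightarrow> real) \<Rightarrow> ('k \<times> 'a list \<times> 'b list \<times> 'a::finite \<Rightarrow> real) set" where
  "XU n p = {xu. cur xu \<in> X0 n p}"

definition cmb :: "real \<Rightarrow> ('i \<Rightarrow> real) \<Rightarrow> ('i \<Rightarrow> real) \<Rightarrow> 'i \<Rightarrow> real" where
  "cmb t x1 x2 = (\<lambda>i. (1 - t) * x1 i + t * x2 i)"

lemma X0_bound:
  assumes x: "realization_plan1 n p x" and p: "simplex p"
  shows "m < n \<Longrightarrow> length ha = m \<Longrightarrow> length hb = m \<Longrightarrow> (\<Sum>a\<in>UNIV. x k ha hb a) \<le> 1"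
proof (induction m arbitrary: ha hb)
  case 0
  then show ?case using x simplex_le1[OF p] unfolding realization_plan1_def by auto
next
  case (Suc m)
  then obtain ha' hb' as bs where e: "ha = ha' @ [as]" "hb = hb' @ [bs]" "length ha' = length hb'"
    using snoc_ex[of ha hb] by fastforce
  have l: "length ha' = m" "length hb' = m" using e Suc.prems by auto
  have "(\<Sum>a\<in>UNIV. x k ha hb a) = x k ha' hb' as" using x e Suc.prems unfolding realization_plan1_def by auto
  also have "\<dots> \<le> (\<Sum>a\<in>UNIV. x k ha' hb' a)"
    using x l Suc.prems unfolding realization_plan1_def by (intro member_le_sum) auto
  also have "\<dots> \<le> 1" using Suc.IH[OF _ l] Suc.prems by simp
  finally show ?case .
qed

lemma X0_entry_bound:
  assumes x: "realization_plan1 n p x" and p: "simplex p" and len: "length ha = length hb" "length ha < n"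
  shows "0 \<le> x k ha hb a \<and> x k ha hb (a::'a::finite) \<le> 1"
proof
  show "0 \<le> x k ha hb a" using x len unfolding realization_plan1_def by auto
  have "x k ha hb a \<le> (\<Sum>a\<in>UNIV. x k ha hb a)"
    using x len unfolding realization_plan1_def by (intro member_le_sum) auto
  also have "\<dots> \<le> 1" using X0_bound[OF x p len(2) refl len(1)[symmetric]] .
  finally show "x k ha hb a \<le> 1" .
qed

lemma XU_closed: "closed (XU n p :: ('k \<times> 'a list \<times> 'b list \<times> 'a::finite \<Rightarrow> real) set)"
proof -
  have eq: "XU n p = {xu :: 'k \<times> 'a list \<times> 'b list \<times> 'a \<Rightarrow> real.
      (\<forall>k. \<forall>ha. \<forall>hb. (length ha = length hb \<and> length ha < n) \<longrightarrow>
        ((\<forall>a. 0 \<le> xu (k, ha, hb, a)) \<and>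
         (\<Sum>a\<in>UNIV. xu (k, ha, hb, a)) = (if ha = [] then p k else xu (k, butlast ha, butlast hb, last ha)))) \<and>
      (\<forall>k. \<forall>ha. \<forall>hb. \<forall>a. \<not> (length ha = length hb \<and> length ha < n) \<longrightarrow> xu (k, ha, hb, a) = 0)}"
    unfolding XU_def X0_def realization_plan1_def cur_def by auto
  have c: "continuous_on UNIV (\<lambda>x :: 'k \<times> 'a list \<times> 'b list \<times> 'a \<Rightarrow> real. x i)" for i by simp
  show ?thesis unfolding eq
    apply (intro closed_Collect_conj closed_Collect_all closed_Collect_imp closed_Collect_const
        open_Collect_const closed_Collect_le closed_Collect_eq continuous_on_sum continuous_on_const c)
    subgoal for k ha hb by (cases "ha = []") (simp_all add: c)
    done
qed

lemma XU_compact: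
  assumes p: "simplex p"
  shows "compact (XU n p :: ('k::finite \<times> 'a list \<times> 'b list \<times> 'a::finite \<Rightarrow> real) set)"
proof -
  define B where "B = (PiE UNIV (\<lambda>i::'k::finite \<times> 'a list \<times> 'b list \<times> 'a. if dom4 n i then {0..1::real} else {0}))"
  have "compactin (product_topology (\<lambda>i. euclidean) UNIV) B"
    unfolding B_def compactin_PiE by auto
  then have cB: "compact B" unfolding euclidean_product_topology compactin_euclidean_iff .
  have sub: "XU n p \<subseteq> B"
  proof
    fix xu :: "'k \<times> 'a list \<times> 'b list \<times> 'a \<Rightarrow> real" assume "xu \<in> XU n p"
    then have x: "realization_plan1 n p (cur xu)"
      and z: "\<forall>k ha hb a. \<not> (length ha = length hb \<and> length ha < n) \<longrightarrow> cur xu k ha hb a = 0"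
      unfolding XU_def X0_def by auto
    have "xu i \<in> (if dom4 n i then {0..1} else {0})" for i
    proof -
      obtain k ha hb a where i: "i = (k, ha, hb, a)" by (cases i) auto
      show ?thesis
        using X0_entry_bound[OF x p, of ha hb k a] z i unfolding dom4_def cur_def by auto
    qed
    then show "xu \<in> B" unfolding B_def by auto
  qed
  have "XU n p = B \<inter> XU n p" using sub by auto
  then show ?thesis using compact_Int_closed[OF cB XU_closed[of n p]] by simp
qed

definition PL :: "('k::finite \<Rightarrow> 'l::finite \<Rightarrow> 'a::finite \<Rightarrow> 'b::finite \<Rightarrow> real) \<Rightarrow> nat
    \<Rightarrow> ('k \<Rightarrow> 'a list \<Rightarrow> 'b list \<Rightarrow> 'a \<Rightarrow> real) \<Rightarrow> ('l \<Rightarrow> 'a list \<Rightarrow> 'b list \<Rightarrow> 'b \<Rightarrow> real) \<Rightarrow> real" where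
  "PL M n x y = (\<Sum>l\<in>UNIV. \<Sum>m<n. \<Sum>h\<in>histories m. \<Sum>a\<in>UNIV. \<Sum>b\<in>UNIV. GG M x l (fst h) (snd h) a b * y l (fst h) (snd h) b)"

lemma PF_PL: "PF M n \<nu> x y = (\<Sum>l\<in>UNIV. \<nu> l * (\<Sum>b\<in>UNIV. y l [] [] b)) + PL M n x y"
  unfolding PF_def PL_def ..

lemma GG_lin: "GG M (\<lambda>k ha hb a. \<alpha> * x1 k ha hb a + \<beta> * x2 k ha hb a) l ha hb a b
    = \<alpha> * GG M x1 l ha hb a b + \<beta> * GG M x2 l ha hb a b"
  unfolding GG_def by (simp add: sum.distrib sum_distrib_left algebra_simps)

lemma PL_lin_x: "PL M n (\<lambda>k ha hb a. \<alpha> * x1 k ha hb a + \<beta> * x2 k ha hb a) y = \<alpha> * PL M n x1 y + \<beta> * PL M n x2 y"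
  unfolding PL_def GG_lin by (simp add: sum.distrib sum_distrib_left algebra_simps)

lemma PL_lin_y: "PL M n x (\<lambda>l ha hb b. \<alpha> * y1 l ha hb b + \<beta> * y2 l ha hb b) = \<alpha> * PL M n x y1 + \<beta> * PL M n x y2"
  unfolding PL_def by (simp add: sum.distrib sum_distrib_left algebra_simps)

lemma PF_lin_x: "PF M n \<nu> (\<lambda>k ha hb a. (1 - t) * x1 k ha hb a + t * x2 k ha hb a) y = (1 - t) * PF M n \<nu> x1 y + t * PF M n \<nu> x2 y"
  unfolding PF_PL PL_lin_x by (simp add: algebra_simps)

lemma lin2: "(\<Sum>i\<in>S. \<alpha> * f i + \<beta> * g i) = \<alpha> * sum f S + \<beta> * (sum g S :: real)"
  by (simp add: sum.distrib sum_distrib_left)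

lemma PF_lin_y_gen: "PF M n \<nu> x (\<lambda>l ha hb b. \<alpha> * y1 l ha hb b + \<beta> * y2 l ha hb b) = \<alpha> * PF M n \<nu> x y1 + \<beta> * PF M n \<nu> x y2"
proof -
  have e: "\<nu> l * (\<Sum>b\<in>UNIV. \<alpha> * y1 l [] [] b + \<beta> * y2 l [] [] b)
     = \<alpha> * (\<nu> l * (\<Sum>b\<in>UNIV. y1 l [] [] b)) + \<beta> * (\<nu> l * (\<Sum>b\<in>UNIV. y2 l [] [] b))" for l
    by (simp add: lin2 algebra_simps)
  have "(\<Sum>l\<in>UNIV. \<nu> l * (\<Sum>b\<in>UNIV. \<alpha> * y1 l [] [] b + \<beta> * y2 l [] [] b))
     = \<alpha> * (\<Sum>l\<in>UNIV. \<nu> l * (\<Sum>b\<in>UNIV. y1 l [] [] b)) + \<beta> * (\<Sum>l\<in>UNIV. \<nu> l * (\<Sum>b\<in>UNIV. y2 l [] [] b))"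
    unfolding e by (rule lin2)
  then show ?thesis unfolding PF_PL PL_lin_y by (simp add: algebra_simps)
qed

lemma PF_lin_y: "PF M n \<nu> x (\<lambda>l ha hb b. (1 - t) * y1 l ha hb b + t * y2 l ha hb b) = (1 - t) * PF M n \<nu> x y1 + t * PF M n \<nu> x y2"
  by (rule PF_lin_y_gen)

lemma PF_cont:
  fixes M :: "'k::finite \<Rightarrow> 'l::finite \<Rightarrow> 'a::finite \<Rightarrow> 'b::finite \<Rightarrow> real"
  shows "continuous_on S (\<lambda>xu. PF M n \<nu> (cur xu) y)"
proof -
  have c: "continuous_on UNIV (\<lambda>x :: 'k \<times> 'a list \<times> 'b list \<times> 'a \<Rightarrow> real. x i)" for i by simp
  have "continuous_on UNIV (\<lambda>xu. PF M n \<nu> (cur xu) y)"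
    unfolding PF_def GG_def cur_def
    by (intro continuous_intros c)
  then show ?thesis by (rule continuous_on_subset) simp
qed

lemma cur_cmb: "cur (cmb t x1 x2) = (\<lambda>k ha hb a. (1 - t) * cur x1 k ha hb a + t * cur x2 k ha hb a)"
  unfolding cur_def cmb_def by simp

lemma XU_convex:
  assumes "x1 \<in> XU n p" "x2 \<in> XU n p" "t \<in> {0..1}"
  shows "cmb t x1 x2 \<in> (XU n p :: ('k \<times> 'a list \<times> 'b list \<times> 'a::finite \<Rightarrow> real) set)"
proof -
  have a1: "realization_plan1 n p (cur x1)" "\<forall>k ha hb a. \<not> (length ha = length hb \<and> length ha < n) \<longrightarrow> cur x1 k ha hb a = 0"
    and a2: "realization_plan1 n p (cur x2)" "\<forall>k ha hb a. \<not> (length ha = length hb \<and> length ha < n) \<longrightarrow> cur x2 k ha hb a = 0"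
    using assms unfolding XU_def X0_def by auto
  have t: "0 \<le> t" "t \<le> 1" using assms by auto
  show ?thesis unfolding XU_def X0_def cur_cmb mem_Collect_eq
  proof (rule conjI)
    show "realization_plan1 n p (\<lambda>k ha hb a. (1 - t) * cur x1 k ha hb a + t * cur x2 k ha hb a)"
      unfolding realization_plan1_def
    proof (intro allI impI conjI)
      fix k and ha :: "'a list" and hb :: "'b list" and a
      assume len: "length ha = length hb \<and> length ha < n"
      show "0 \<le> (1 - t) * cur x1 k ha hb a + t * cur x2 k ha hb a"
        using a1(1) a2(1) len t unfolding realization_plan1_def by (auto intro!: add_nonneg_nonneg mult_nonneg_nonneg)
      have s1: "(\<Sum>a\<in>UNIV. cur x1 k ha hb a) = (if ha = [] then p k else cur x1 k (butlast ha) (butlast hb) (last ha))"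
        and s2: "(\<Sum>a\<in>UNIV. cur x2 k ha hb a) = (if ha = [] then p k else cur x2 k (butlast ha) (butlast hb) (last ha))"
        using a1(1) a2(1) len unfolding realization_plan1_def by auto
      show "(\<Sum>a\<in>UNIV. (1 - t) * cur x1 k ha hb a + t * cur x2 k ha hb a) =
          (if ha = [] then p k else (1 - t) * cur x1 k (butlast ha) (butlast hb) (last ha) + t * cur x2 k (butlast ha) (butlast hb) (last ha))"
        unfolding lin2 s1 s2 by (cases "ha = []") (simp_all add: algebra_simps)
    qed
    show "\<forall>k ha hb a. \<not> (length ha = length hb \<and> length ha < n) \<longrightarrow>
        (1 - t) * cur x1 k ha hb a + t * cur x2 k ha hb a = 0" using a1(2) a2(2) by auto
  qed
qed

definition Y0 :: "nat \<Rightarrow> ('l::finite \<Rightarrow> 'a list \<Rightarrow> 'b list \<Rightarrow> 'b::finite \<Rightarrow> real) set" where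
  "Y0 n = {y. \<exists>q. simplex q \<and> realization_plan2 n q y \<and>
     (\<forall>l ha hb b. \<not> (length ha = length hb \<and> length ha < n) \<longrightarrow> y l ha hb b = 0)}"

definition cmb4 :: "real \<Rightarrow> ('l \<Rightarrow> 'a list \<Rightarrow> 'b list \<Rightarrow> 'b \<Rightarrow> real) \<Rightarrow> ('l \<Rightarrow> 'a list \<Rightarrow> 'b list \<Rightarrow> 'b \<Rightarrow> real)
    \<Rightarrow> 'l \<Rightarrow> 'a list \<Rightarrow> 'b list \<Rightarrow> 'b \<Rightarrow> real" where
  "cmb4 t y1 y2 = (\<lambda>l ha hb b. (1 - t) * y1 l ha hb b + t * y2 l ha hb b)"

lemma Y0_convex:
  assumes "y1 \<in> Y0 n" "y2 \<in> Y0 n" "t \<in> {0..1}"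
  shows "cmb4 t y1 y2 \<in> (Y0 n :: ('l::finite \<Rightarrow> 'a list \<Rightarrow> 'b list \<Rightarrow> 'b::finite \<Rightarrow> real) set)"
proof -
  obtain q1 q2 where a1: "simplex q1" "realization_plan2 n q1 y1" "\<forall>l ha hb b. \<not> (length ha = length hb \<and> length ha < n) \<longrightarrow> y1 l ha hb b = 0"
    and a2: "simplex q2" "realization_plan2 n q2 y2" "\<forall>l ha hb b. \<not> (length ha = length hb \<and> length ha < n) \<longrightarrow> y2 l ha hb b = 0"
    using assms unfolding Y0_def by auto
  have t: "0 \<le> t" "t \<le> 1" using assms by auto
  define q where "q l = (1 - t) * q1 l + t * q2 l" for l
  have sq: "simplex q" using a1(1) a2(1) t unfolding simplex_def q_def
    by (auto simp: sum.distrib sum_distrib_left[symmetric] intro!: add_nonneg_nonneg mult_nonneg_nonneg)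
  have rq: "realization_plan2 n q (cmb4 t y1 y2)"
    unfolding realization_plan2_def cmb4_def
  proof (intro allI impI conjI)
    fix l and ha :: "'a list" and hb :: "'b list" and b
    assume len: "length ha = length hb \<and> length ha < n"
    show "0 \<le> (1 - t) * y1 l ha hb b + t * y2 l ha hb b"
      using a1(2) a2(2) len t unfolding realization_plan2_def by (auto intro!: add_nonneg_nonneg mult_nonneg_nonneg)
    have s1: "(\<Sum>b\<in>UNIV. y1 l ha hb b) = (if hb = [] then q1 l else y1 l (butlast ha) (butlast hb) (last hb))"
      and s2: "(\<Sum>b\<in>UNIV. y2 l ha hb b) = (if hb = [] then q2 l else y2 l (butlast ha) (butlast hb) (last hb))"
      using a1(2) a2(2) len unfolding realization_plan2_def by auto
    show "(\<Sum>b\<in>UNIV. (1 - t) * y1 l ha hb b + t * y2 l ha hb b) =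
        (if hb = [] then q l else (1 - t) * y1 l (butlast ha) (butlast hb) (last hb) + t * y2 l (butlast ha) (butlast hb) (last hb))"
      unfolding lin2 s1 s2 q_def by (cases "hb = []") (simp_all add: algebra_simps)
  qed
  have "\<forall>l ha hb b. \<not> (length ha = length hb \<and> length ha < n) \<longrightarrow> cmb4 t y1 y2 l ha hb b = 0"
    using a1(3) a2(3) unfolding cmb4_def by auto
  then show ?thesis unfolding Y0_def using sq rq by blast
qed


definition unc :: "('k \<Rightarrow> 'a list \<Rightarrow> 'b list \<Rightarrow> 'a \<Rightarrow> real) \<Rightarrow> ('k \<times> 'a list \<times> 'b list \<times> 'a \<Rightarrow> real)" where
  "unc x = (\<lambda>i. x (fst i) (fst (snd i)) (fst (snd (snd i))) (snd (snd (snd i))))"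

lemma cur_unc[simp]: "cur (unc x) = x" unfolding cur_def unc_def by simp

lemma uniform_stoch1: "stoch1 n (\<lambda>k ha hb (a::'a::finite). 1 / real (card (UNIV :: 'a set)))"
  unfolding stoch1_def by simp

lemma uniform_stoch2: "stoch2 n (\<lambda>l ha hb (b::'b::finite). 1 / real (card (UNIV :: 'b set)))"
  unfolding stoch2_def by simp

lemma plan1_X0:
  assumes "\<forall>k. p k \<ge> 0" "stoch1 n \<sigma>"
  shows "plan1 n p \<sigma> \<in> X0 n p"
  unfolding X0_def using plan1_real[OF assms] by (auto simp: plan1_def)

lemma plan2_Y0:
  assumes "simplex q" "stoch2 n \<tau>"
  shows "plan2 n q \<tau> \<in> Y0 n"
proof -
  have "\<forall>l. q l \<ge> 0" using assms unfolding simplex_def by auto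
  then show ?thesis unfolding Y0_def using plan2_real[OF _ assms(2)] assms(1) by (auto simp: plan2_def)
qed

lemma plan1_strat_eq:
  assumes "x \<in> X0 n p" "\<forall>k. p k \<ge> 0"
  shows "plan1 n p (strategy_of_plan1 p x) = x"
proof (intro ext)
  fix k ha hb a
  show "plan1 n p (strategy_of_plan1 p x) k ha hb a = x k ha hb a"
  proof (cases "length ha = length hb \<and> length ha < n")
    case True
    then show ?thesis using plan1_recover[of n p x] assms unfolding X0_def by auto
  next
    case False
    then show ?thesis using assms unfolding X0_def plan1_def by auto
  qed
qed

lemma plan2_strat_eq:
  assumes "realization_plan2 n q y" "simplex q"
    "\<forall>l ha hb b. \<not> (length ha = length hb \<and> length ha < n) \<longrightarrow> y l ha hb b = 0"
  shows "plan2 n q (strategy_of_plan2 q y) = y"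
proof (intro ext)
  have q: "\<forall>l. q l \<ge> 0" using assms unfolding simplex_def by auto
  fix l ha hb b
  show "plan2 n q (strategy_of_plan2 q y) l ha hb b = y l ha hb b"
  proof (cases "length ha = length hb \<and> length ha < n")
    case True
    then show ?thesis using plan2_recover[OF assms(1) q] by auto
  next
    case False
    then show ?thesis using assms unfolding plan2_def by auto
  qed
qed

theorem part1:
  fixes M :: "'k::finite \<Rightarrow> 'l::finite \<Rightarrow> 'a::finite \<Rightarrow> 'b::finite \<Rightarrow> real"
    and p :: "'k \<Rightarrow> real" and \<nu> :: "'l \<Rightarrow> real"
  assumes n: "1 \<le> n" and p: "simplex p"
  shows
    "dual2_upper_value M n p \<nu> = dual2_value M n p \<nu>
     \<and> (\<exists>x u u0. lp2_feasible M n p \<nu> x u u0 (dual2_value M n p \<nu>))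
     \<and> (\<forall>x u u0 ut. lp2_feasible M n p \<nu> x u u0 ut \<longrightarrow> ut \<le> dual2_value M n p \<nu>)
     \<and> (\<forall>x u u0. lp2_feasible M n p \<nu> x u u0 (dual2_value M n p \<nu>) \<longrightarrow>
          dual2_security_strategy M n p \<nu> (strategy_of_plan1 p x)
          \<and> (\<forall>k a. p k > 0 \<longrightarrow> strategy_of_plan1 p x k [] [] a = x k [] [] a / p k))"
proof -
  have p0: "\<forall>k. p k \<ge> 0" using p unfolding simplex_def by auto
  define S1 :: "('k \<Rightarrow> 'a list \<Rightarrow> 'b list \<Rightarrow> 'a \<Rightarrow> real) set" where "S1 = {\<sigma>. stoch1 n \<sigma>}"
  define S2 :: "(('l \<Rightarrow> real) \<times> ('l \<Rightarrow> 'a list \<Rightarrow> 'b list \<Rightarrow> 'b \<Rightarrow> real)) set"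
    where "S2 = {(q, \<tau>). simplex q \<and> stoch2 n \<tau>}"
  define P where "P \<sigma> qt = dual2_payoff M n p \<nu> \<sigma> (fst qt) (snd qt)" for \<sigma> qt
  define B where "B = (\<Sum>l\<in>UNIV. \<bar>\<nu> l\<bar>) + real n * Mall M"
  define g where "g \<sigma> = (INF qt\<in>S2. P \<sigma> qt)" for \<sigma>
  define G where "G qt = (SUP \<sigma>\<in>S1. P \<sigma> qt)" for qt
  have gdef: "dual2_guarantee M n p \<nu> \<sigma> = g \<sigma>" for \<sigma>
    unfolding dual2_guarantee_def g_def S2_def P_def ..
  have vdef: "dual2_value M n p \<nu> = (SUP \<sigma>\<in>S1. g \<sigma>)"
    unfolding dual2_value_def S1_def gdef ..
  have Udef: "dual2_upper_value M n p \<nu> = (INF qt\<in>S2. G qt)"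
    unfolding dual2_upper_value_def G_def S1_def S2_def P_def ..
  have PB: "\<bar>P \<sigma> qt\<bar> \<le> B" if "\<sigma> \<in> S1" "qt \<in> S2" for \<sigma> qt
    using that dual2_payoff_bound[OF p, of "fst qt" n \<sigma> "snd qt" M \<nu>] unfolding S1_def S2_def P_def B_def
    by (auto simp: case_prod_beta)
  have PPF: "P \<sigma> qt = PF M n \<nu> (plan1 n p \<sigma>) (plan2 n (fst qt) (snd qt))" if "\<sigma> \<in> S1" "qt \<in> S2" for \<sigma> qt
    using that payoff_PF[OF n] unfolding S1_def S2_def P_def by (auto simp: case_prod_beta)
  define l00 :: 'l where "l00 = undefined"
  define qt0 where "qt0 = ((\<lambda>l. if l = l00 then 1 else 0::real), (\<lambda>l ha hb b. 1 / real (card (UNIV :: 'b set))) :: 'l \<Rightarrow> 'a list \<Rightarrow> 'b list \<Rightarrow> 'b \<Rightarrow> real)"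
  have S2ne: "qt0 \<in> S2" unfolding S2_def qt0_def simplex_def using uniform_stoch2 by auto
  have S1ne: "(\<lambda>k ha hb a. 1 / real (card (UNIV :: 'a set))) \<in> S1" unfolding S1_def using uniform_stoch1 by auto
  have bbP: "bdd_below (P \<sigma> ` S2)" if "\<sigma> \<in> S1" for \<sigma>
    using PB[OF that] by (intro bdd_belowI[where m="-B"]) (force simp: abs_le_iff)
  have baP: "bdd_above ((\<lambda>\<sigma>. P \<sigma> qt) ` S1)" if "qt \<in> S2" for qt
    using PB[OF _ that] by (intro bdd_aboveI[where M=B]) (force simp: abs_le_iff)
  have g_le: "g \<sigma> \<le> P \<sigma> qt" if "\<sigma> \<in> S1" "qt \<in> S2" for \<sigma> qt
    unfolding g_def by (rule cINF_lower[OF bbP[OF that(1)] that(2)])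
  have G_ge: "P \<sigma> qt \<le> G qt" if "\<sigma> \<in> S1" "qt \<in> S2" for \<sigma> qt
    unfolding G_def by (rule cSUP_upper[OF that(1) baP[OF that(2)]])
  have gB: "g \<sigma> \<le> B" if "\<sigma> \<in> S1" for \<sigma>
    using g_le[OF that S2ne] PB[OF that S2ne] by (auto simp: abs_le_iff)
  have GB: "- B \<le> G qt" if "qt \<in> S2" for qt
    using G_ge[OF S1ne that] PB[OF S1ne that] by (auto simp: abs_le_iff)
  have bag: "bdd_above (g ` S1)" using gB by (intro bdd_aboveI[where M=B]) auto
  have bbG: "bdd_below (G ` S2)" using GB by (intro bdd_belowI[where m="-B"]) auto
  define U where "U = (INF qt\<in>S2. G qt)"
  define V where "V = (SUP \<sigma>\<in>S1. g \<sigma>)"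
  have g_U: "g \<sigma> \<le> U" if "\<sigma> \<in> S1" for \<sigma>
    unfolding U_def
  proof (rule cINF_greatest)
    show "S2 \<noteq> {}" using S2ne by auto
    fix qt assume "qt \<in> S2"
    then show "g \<sigma> \<le> G qt" using g_le[OF that] G_ge[OF that] by (meson order_trans)
  qed
  have VU: "V \<le> U" unfolding V_def using S1ne g_U by (intro cSUP_least) auto
  define F where "F xu y = PF M n \<nu> (cur xu) y" for xu :: "'k \<times> 'a list \<times> 'b list \<times> 'a \<Rightarrow> real" and y
  have XUne: "XU n p \<noteq> ({} :: ('k \<times> 'a list \<times> 'b list \<times> 'a \<Rightarrow> real) set)"
  proof -
    have "stoch1 n (\<lambda>(k::'k) (ha::'a list) (hb::'b list) (a::'a). 1 / real (card (UNIV :: 'a set)))"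
      using S1ne unfolding S1_def by simp
    then have "unc (plan1 n p (\<lambda>(k::'k) (ha::'a list) (hb::'b list) (a::'a). 1 / real (card (UNIV :: 'a set)))) \<in> XU n p"
      unfolding XU_def using plan1_X0[OF p0] by simp
    then show ?thesis by blast
  qed
  obtain xu0 where xu0: "xu0 \<in> XU n p"
    and mm: "\<forall>c. (\<forall>y\<in>Y0 n. \<exists>x\<in>XU n p. F x y > c) \<longrightarrow> (\<forall>y\<in>Y0 n. F xu0 y \<ge> c)"
  proof -
    have "\<exists>x0\<in>XU n p. \<forall>c. (\<forall>y\<in>Y0 n. \<exists>x\<in>XU n p. F x y > c) \<longrightarrow> (\<forall>y\<in>Y0 n. F x0 y \<ge> c)"
    proof (rule minimax_abs[where cx=cmb and cy=cmb4])
      show "\<forall>x1\<in>XU n p. \<forall>x2\<in>XU n p. \<forall>t\<in>{0..1}. cmb t x1 x2 \<in> XU n p" using XU_convex by blast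
      show "\<forall>x1\<in>XU n p. \<forall>x2\<in>XU n p. \<forall>t\<in>{0..1}. \<forall>y\<in>Y0 n. F (cmb t x1 x2) y = (1 - t) * F x1 y + t * F x2 y"
        unfolding F_def cur_cmb PF_lin_x by blast
      show "\<forall>y1\<in>Y0 n. \<forall>y2\<in>Y0 n. \<forall>t\<in>{0..1}. cmb4 t y1 y2 \<in> Y0 n" using Y0_convex by blast
      show "\<forall>y1\<in>Y0 n. \<forall>y2\<in>Y0 n. \<forall>t\<in>{0..1}. \<forall>x\<in>XU n p. F x (cmb4 t y1 y2) = (1 - t) * F x y1 + t * F x y2"
        unfolding F_def cmb4_def PF_lin_y by blast
      show "compact (XU n p)" by (rule XU_compact[OF p])
      show "XU n p \<noteq> ({} :: ('k \<times> 'a list \<times> 'b list \<times> 'a \<Rightarrow> real) set)" by (rule XUne)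
      show "\<forall>y\<in>Y0 n. continuous_on (XU n p) (\<lambda>x. F x y)" unfolding F_def using PF_cont by blast
    qed
    then show ?thesis using that by blast
  qed
  define xs where "xs = cur xu0"
  have xsX: "xs \<in> X0 n p" using xu0 unfolding xs_def XU_def by simp
  have xs_real: "realization_plan1 n p xs" using xsX unfolding X0_def by simp
  define \<sigma>s where "\<sigma>s = strategy_of_plan1 p xs"
  have \<sigma>sS: "\<sigma>s \<in> S1" unfolding S1_def \<sigma>s_def using strat1_stoch[OF xs_real p0] by simp
  have plan_\<sigma>s: "plan1 n p \<sigma>s = xs" unfolding \<sigma>s_def by (rule plan1_strat_eq[OF xsX p0])
  have Y0_S2: "\<exists>qt\<in>S2. plan2 n (fst qt) (snd qt) = y" if yY: "y \<in> Y0 n" for y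
  proof -
    obtain q where q: "simplex q" "realization_plan2 n q y"
      "\<forall>l ha hb b. \<not> (length ha = length hb \<and> length ha < n) \<longrightarrow> y l ha hb b = 0"
      using yY unfolding Y0_def mem_Collect_eq by blast
    have q0: "\<forall>l. q l \<ge> 0" using q unfolding simplex_def by auto
    have "(q, strategy_of_plan2 q y) \<in> S2" unfolding S2_def using q strat2_stoch[OF q(2) q0] by simp
    then show ?thesis using plan2_strat_eq[OF q(2,1,3)] by force
  qed
  have xs_ge: "PF M n \<nu> xs y \<ge> U" if "y \<in> Y0 n" for y
  proof (rule ccontr)
    assume "\<not> PF M n \<nu> xs y \<ge> U"
    then have lt: "PF M n \<nu> xs y < U" by simp
    define c where "c = (PF M n \<nu> xs y + U) / 2"
    have "\<forall>y\<in>Y0 n. \<exists>x\<in>XU n p. F x y > c"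
    proof
      fix y' :: "'l \<Rightarrow> 'a list \<Rightarrow> 'b list \<Rightarrow> 'b \<Rightarrow> real" assume y': "y' \<in> Y0 n"
      then obtain qt where qt: "qt \<in> S2" "plan2 n (fst qt) (snd qt) = y'" using Y0_S2 by blast
      have "c < U" using lt unfolding c_def by simp
      also have "U \<le> G qt" unfolding U_def by (rule cINF_lower[OF bbG qt(1)])
      finally have "c < (SUP \<sigma>\<in>S1. P \<sigma> qt)" unfolding G_def .
      then obtain \<sigma> where \<sigma>: "\<sigma> \<in> S1" "c < P \<sigma> qt"
        using less_cSUP_iff[of S1 "\<lambda>\<sigma>. P \<sigma> qt" c] S1ne baP[OF qt(1)] by blast
      have "unc (plan1 n p \<sigma>) \<in> XU n p" unfolding XU_def using plan1_X0[OF p0] \<sigma>(1) S1_def by simp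
      moreover have "F (unc (plan1 n p \<sigma>)) y' = P \<sigma> qt" unfolding F_def using PPF[OF \<sigma>(1) qt(1)] qt(2) by simp
      ultimately show "\<exists>x\<in>XU n p. F x y' > c" using \<sigma>(2) by (intro bexI[of _ "unc (plan1 n p \<sigma>)"]) simp_all
    qed
    then have "F xu0 y \<ge> c" using mm that by blast
    then show False using lt unfolding F_def xs_def[symmetric] c_def by simp
  qed
  have g\<sigma>s: "g \<sigma>s \<ge> U"
    unfolding g_def
  proof (rule cINF_greatest)
    show "S2 \<noteq> {}" using S2ne by auto
    fix qt assume qt: "qt \<in> S2"
    have "plan2 n (fst qt) (snd qt) \<in> Y0 n" using qt plan2_Y0 unfolding S2_def by auto
    then show "U \<le> P \<sigma>s qt" using PPF[OF \<sigma>sS qt] plan_\<sigma>s xs_ge by simp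
  qed
  have Vg: "g \<sigma>s \<le> V" unfolding V_def by (rule cSUP_upper[OF \<sigma>sS bag])
  have UV: "U = V" using VU Vg g\<sigma>s by simp
  have g\<sigma>sV: "g \<sigma>s = V" using VU Vg g\<sigma>s by simp
  have feas_g: "g (strategy_of_plan1 p x) \<ge> ut" and feasS: "strategy_of_plan1 p x \<in> S1"
    if lp: "lp2_feasible M n p \<nu> x u u0 ut" for x u u0 ut
  proof -
    have xr: "realization_plan1 n p x" using lp unfolding lp2_feasible_def by simp
    show S: "strategy_of_plan1 p x \<in> S1" unfolding S1_def using strat1_stoch[OF xr p0] by simp
    show "g (strategy_of_plan1 p x) \<ge> ut"
      unfolding g_def
    proof (rule cINF_greatest)
      show "S2 \<noteq> {}" using S2ne by auto
      fix qt assume qt: "qt \<in> S2"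
      have sq: "simplex (fst qt)" and st: "stoch2 n (snd qt)" using qt unfolding S2_def by auto
      have q0: "\<forall>l. fst qt l \<ge> 0" using sq unfolding simplex_def by auto
      have "P (strategy_of_plan1 p x) qt = PF M n \<nu> (plan1 n p (strategy_of_plan1 p x)) (plan2 n (fst qt) (snd qt))"
        by (rule PPF[OF S qt])
      also have "\<dots> = PF M n \<nu> x (plan2 n (fst qt) (snd qt))"
        using plan1_recover[OF xr p0] n by (intro PF_cong) auto
      finally show "ut \<le> P (strategy_of_plan1 p x) qt"
        using lp_lower[OF n lp plan2_real[OF q0 st] sq] by simp
    qed
  qed
  have exist: "\<exists>x u u0. lp2_feasible M n p \<nu> x u u0 V"
  proof (intro exI)
    show "lp2_feasible M n p \<nu> xs (uDP M xs n) (u0DP M xs n) V"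
    proof (rule lp_DP[OF n xs_real], intro allI)
      fix l0 :: 'l
      define qg where "qg = (\<lambda>l. if l = l0 then 1 else 0::real)"
      have qtS: "(qg, tauG M xs n) \<in> S2" unfolding S2_def qg_def simplex_def using tauG_stoch by auto
      have "V = g \<sigma>s" using g\<sigma>sV by simp
      also have "\<dots> \<le> P \<sigma>s (qg, tauG M xs n)" by (rule g_le[OF \<sigma>sS qtS])
      also have "\<dots> = PF M n \<nu> xs (plan2 n qg (tauG M xs n))" using PPF[OF \<sigma>sS qtS] plan_\<sigma>s by simp
      also have "\<dots> = \<nu> l0 + u0DP M xs n l0" unfolding qg_def by (rule greedy_value[OF n])
      finally show "V \<le> u0DP M xs n l0 + \<nu> l0" by simp
    qed
  qed
  show ?thesis
  proof (intro conjI allI impI)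
    show "dual2_upper_value M n p \<nu> = dual2_value M n p \<nu>" unfolding Udef vdef U_def[symmetric] V_def[symmetric] UV ..
    show "\<exists>x u u0. lp2_feasible M n p \<nu> x u u0 (dual2_value M n p \<nu>)" unfolding vdef V_def[symmetric] by (rule exist)
  next
    fix x u u0 ut assume lp: "lp2_feasible M n p \<nu> x u u0 ut"
    have "g (strategy_of_plan1 p x) \<le> V" unfolding V_def by (rule cSUP_upper[OF feasS[OF lp] bag])
    then show "ut \<le> dual2_value M n p \<nu>" using feas_g[OF lp] unfolding vdef V_def[symmetric] by simp
  next
    fix x u u0 assume lp: "lp2_feasible M n p \<nu> x u u0 (dual2_value M n p \<nu>)"
    have "g (strategy_of_plan1 p x) \<le> V" unfolding V_def by (rule cSUP_upper[OF feasS[OF lp] bag])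
    moreover have "g (strategy_of_plan1 p x) \<ge> V" using feas_g[OF lp] unfolding vdef V_def[symmetric] .
    ultimately show "dual2_security_strategy M n p \<nu> (strategy_of_plan1 p x)"
      unfolding dual2_security_strategy_def gdef vdef V_def[symmetric] using feasS[OF lp] S1_def by simp
  next
    fix x :: "'k \<Rightarrow> 'a list \<Rightarrow> 'b list \<Rightarrow> 'a \<Rightarrow> real" and k a
    assume "p k > 0"
    then show "strategy_of_plan1 p x k [] [] a = x k [] [] a / p k"
      unfolding strategy_of_plan1_def Let_def by simp
  qed
qed


lemma INF_neg_real: "(INF x\<in>A. - g x) = - (SUP x\<in>A. g x :: real)"
  by (simp add: Inf_real_def image_image)

lemma SUP_neg_real: "(SUP x\<in>A. - g x) = - (INF x\<in>A. g x :: real)"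
  by (simp add: Inf_real_def image_image)

definition swp :: "('i \<Rightarrow> 'x list \<Rightarrow> 'y list \<Rightarrow> 'c \<Rightarrow> real) \<Rightarrow> 'i \<Rightarrow> 'y list \<Rightarrow> 'x list \<Rightarrow> 'c \<Rightarrow> real" where
  "swp f i l1 l2 c = f i l2 l1 c"

lemma swp_swp[simp]: "swp (swp f) = f" unfolding swp_def by (intro ext) simp

definition Mt :: "('k \<Rightarrow> 'l \<Rightarrow> 'a \<Rightarrow> 'b \<Rightarrow> real) \<Rightarrow> 'l \<Rightarrow> 'k \<Rightarrow> 'b \<Rightarrow> 'a \<Rightarrow> real" where
  "Mt M l k b a = - M k l a b"

definition uw :: "('k \<Rightarrow> 'a list \<Rightarrow> 'b list \<Rightarrow> 'a \<Rightarrow> 'b \<Rightarrow> real) \<Rightarrow> 'k \<Rightarrow> 'b list \<Rightarrow> 'a list \<Rightarrow> 'b \<Rightarrow> 'a \<Rightarrow> real" where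
  "uw w k hb ha b a = - w k ha hb a b"

lemma uw_uw[simp]: "uw (uw w) = (\<lambda>k ha hb a b. w k ha hb a b)" unfolding uw_def by simp

lemma stoch1_swp: "stoch1 n (swp \<tau>) \<longleftrightarrow> stoch2 n \<tau>"
  unfolding stoch1_def stoch2_def swp_def by auto

lemma stoch2_swp: "stoch2 n (swp \<sigma>) \<longleftrightarrow> stoch1 n \<sigma>"
  unfolding stoch1_def stoch2_def swp_def by auto

lemma swp_image_stoch1: "{\<sigma>'. stoch1 n \<sigma>'} = swp ` {\<tau>. stoch2 n \<tau>}"
  using stoch1_swp by (auto intro!: image_eqI[where x="swp _"]) (metis stoch1_swp swp_swp)

lemma swp_image_stoch2: "{\<tau>'. stoch2 n \<tau>'} = swp ` {\<sigma>. stoch1 n \<sigma>}"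
  using stoch2_swp by (auto intro!: image_eqI[where x="swp _"]) (metis stoch2_swp swp_swp)

lemma histories_swap: "(histories m :: ('b list \<times> 'a list) set) = prod.swap ` histories m"
  unfolding histories_def by auto

lemma reach_swp:
  assumes "length ha = length hb"
  shows "reach (swp \<tau>) (swp \<sigma>) l k hb ha = reach \<sigma> \<tau> k l ha hb"
  unfolding reach_def swp_def using assms by (simp add: mult.commute)

lemma cond_payoff_swp:
  fixes M :: "'k::finite \<Rightarrow> 'l::finite \<Rightarrow> 'a::finite \<Rightarrow> 'b::finite \<Rightarrow> real"
  shows "cond_payoff (Mt M) n (swp \<tau>) (swp \<sigma>) l k = - cond_payoff M n \<sigma> \<tau> k l"
proof -
  have "cond_payoff (Mt M) n (swp \<tau>) (swp \<sigma>) l k =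
      (\<Sum>h\<in>prod.swap ` (histories n :: ('a list \<times> 'b list) set). reach (swp \<tau>) (swp \<sigma>) l k (fst h) (snd h) *
         (\<Sum>r<n. Mt M l k (fst h ! r) (snd h ! r)))"
    unfolding cond_payoff_def histories_swap[where 'a='a and 'b='b] ..
  also have "\<dots> = (\<Sum>h\<in>histories n. reach (swp \<tau>) (swp \<sigma>) l k (snd h) (fst h) *
         (\<Sum>r<n. Mt M l k (snd h ! r) (fst h ! r)))"
    by (subst sum.reindex) (auto simp: inj_on_def)
  also have "\<dots> = (\<Sum>h\<in>histories n. - (reach \<sigma> \<tau> k l (fst h) (snd h) * (\<Sum>r<n. M k l (fst h ! r) (snd h ! r))))"
  proof (intro sum.cong refl)
    fix h :: "'a list \<times> 'b list" assume "h \<in> histories n"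
    then have "length (fst h) = length (snd h)" unfolding histories_def by auto
    then show "reach (swp \<tau>) (swp \<sigma>) l k (snd h) (fst h) * (\<Sum>r<n. Mt M l k (snd h ! r) (fst h ! r)) =
        - (reach \<sigma> \<tau> k l (fst h) (snd h) * (\<Sum>r<n. M k l (fst h ! r) (snd h ! r)))"
      by (simp add: reach_swp Mt_def sum_negf)
  qed
  also have "\<dots> = - cond_payoff M n \<sigma> \<tau> k l" unfolding cond_payoff_def by (simp add: sum_negf)
  finally show ?thesis .
qed

lemma payoff_swp:
  fixes M :: "'k::finite \<Rightarrow> 'l::finite \<Rightarrow> 'a::finite \<Rightarrow> 'b::finite \<Rightarrow> real"
  shows "dual2_payoff (Mt M) n q (\<lambda>k. - \<mu> k) (swp \<tau>) \<pi> (swp \<sigma>) = - dual1_payoff M n \<mu> q \<pi> \<sigma> \<tau>"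
  unfolding dual2_payoff_def dual1_payoff_def cond_payoff_swp
  by (simp add: sum_negf sum_subtractf sum.distrib algebra_simps)

lemma guarantee_swp:
  fixes M :: "'k::finite \<Rightarrow> 'l::finite \<Rightarrow> 'a::finite \<Rightarrow> 'b::finite \<Rightarrow> real"
  shows "dual2_guarantee (Mt M) n q (\<lambda>k. - \<mu> k) (swp \<tau>) = - dual1_guarantee M n \<mu> q \<tau>"
proof -
  have e: "{(\<pi>, \<tau>'). simplex (\<pi> :: 'k \<Rightarrow> real) \<and> stoch2 n (\<tau>' :: 'k \<Rightarrow> 'b list \<Rightarrow> 'a list \<Rightarrow> 'a \<Rightarrow> real)} = (\<lambda>ps. (fst ps, swp (snd ps))) ` {(\<pi>, \<sigma>). simplex \<pi> \<and> stoch1 n (\<sigma> :: 'k \<Rightarrow> 'a list \<Rightarrow> 'b list \<Rightarrow> 'a \<Rightarrow> real)}"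
  proof (rule set_eqI, rule iffI)
    fix z :: "('k \<Rightarrow> real) \<times> ('k \<Rightarrow> 'b list \<Rightarrow> 'a list \<Rightarrow> 'a \<Rightarrow> real)"
    assume "z \<in> {(\<pi>, \<tau>'). simplex \<pi> \<and> stoch2 n \<tau>'}"
    then show "z \<in> (\<lambda>ps. (fst ps, swp (snd ps))) ` {(\<pi>, \<sigma>). simplex \<pi> \<and> stoch1 n \<sigma>}"
      by (intro image_eqI[where x="(fst z, swp (snd z))"]) (auto simp: stoch2_swp[symmetric])
  qed (auto simp: stoch2_swp)
  show ?thesis
    unfolding dual2_guarantee_def dual1_guarantee_def e image_image
    by (simp add: payoff_swp INF_neg_real)
qed

lemma value_swp:
  fixes M :: "'k::finite \<Rightarrow> 'l::finite \<Rightarrow> 'a::finite \<Rightarrow> 'b::finite \<Rightarrow> real"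
  shows "dual2_value (Mt M) n q (\<lambda>k. - \<mu> k) = - dual1_value M n \<mu> q"
  unfolding dual2_value_def dual1_value_def swp_image_stoch1 image_image guarantee_swp
  by (simp add: SUP_neg_real)

lemma upper_swp:
  fixes M :: "'k::finite \<Rightarrow> 'l::finite \<Rightarrow> 'a::finite \<Rightarrow> 'b::finite \<Rightarrow> real"
  shows "dual2_upper_value (Mt M) n q (\<lambda>k. - \<mu> k) = - dual1_lower_value M n \<mu> q"
proof -
  have e: "{(\<pi>, \<tau>'). simplex (\<pi> :: 'k \<Rightarrow> real) \<and> stoch2 n (\<tau>' :: 'k \<Rightarrow> 'b list \<Rightarrow> 'a list \<Rightarrow> 'a \<Rightarrow> real)} = (\<lambda>ps. (fst ps, swp (snd ps))) ` {(\<pi>, \<sigma>). simplex \<pi> \<and> stoch1 n (\<sigma> :: 'k \<Rightarrow> 'a list \<Rightarrow> 'b list \<Rightarrow> 'a \<Rightarrow> real)}"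
  proof (rule set_eqI, rule iffI)
    fix z :: "('k \<Rightarrow> real) \<times> ('k \<Rightarrow> 'b list \<Rightarrow> 'a list \<Rightarrow> 'a \<Rightarrow> real)"
    assume "z \<in> {(\<pi>, \<tau>'). simplex \<pi> \<and> stoch2 n \<tau>'}"
    then show "z \<in> (\<lambda>ps. (fst ps, swp (snd ps))) ` {(\<pi>, \<sigma>). simplex \<pi> \<and> stoch1 n \<sigma>}"
      by (intro image_eqI[where x="(fst z, swp (snd z))"]) (auto simp: stoch2_swp[symmetric])
  qed (auto simp: stoch2_swp)
  show ?thesis
    unfolding dual2_upper_value_def dual1_lower_value_def e image_image swp_image_stoch1
    by (simp add: payoff_swp SUP_neg_real INF_neg_real)
qed

lemma security_swp:
  fixes M :: "'k::finite \<Rightarrow> 'l::finite \<Rightarrow> 'a::finite \<Rightarrow> 'b::finite \<Rightarrow> real"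
  shows "dual2_security_strategy (Mt M) n q (\<lambda>k. - \<mu> k) (swp \<tau>) \<longleftrightarrow> dual1_security_strategy M n \<mu> q \<tau>"
  unfolding dual2_security_strategy_def dual1_security_strategy_def guarantee_swp value_swp stoch1_swp
  by simp

lemma real_swp:
  fixes y :: "'l \<Rightarrow> 'a list \<Rightarrow> 'b list \<Rightarrow> 'b::finite \<Rightarrow> real"
  shows "realization_plan1 n q (swp y) \<longleftrightarrow> realization_plan2 n q y"
proof
  assume A: "realization_plan1 n q (swp y)"
  show "realization_plan2 n q y" unfolding realization_plan2_def
  proof (intro allI impI)
    fix l and ha :: "'a list" and hb :: "'b list" assume h: "length ha = length hb \<and> length ha < n"
    have "length hb = length ha \<and> length hb < n" using h by simp
    then show "(\<forall>b. 0 \<le> y l ha hb b) \<and> (\<Sum>b\<in>UNIV. y l ha hb b) = (if hb = [] then q l else y l (butlast ha) (butlast hb) (last hb))"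
      using A unfolding realization_plan1_def swp_def by blast
  qed
next
  assume A: "realization_plan2 n q y"
  show "realization_plan1 n q (swp y)" unfolding realization_plan1_def swp_def
  proof (intro allI impI)
    fix l and hb :: "'b list" and ha :: "'a list" assume h: "length hb = length ha \<and> length hb < n"
    have "length ha = length hb \<and> length ha < n" using h by simp
    then show "(\<forall>b. 0 \<le> y l ha hb b) \<and> (\<Sum>b\<in>UNIV. y l ha hb b) = (if hb = [] then q l else y l (butlast ha) (butlast hb) (last hb))"
      using A unfolding realization_plan2_def by blast
  qed
qed

lemma strat_swp: "strategy_of_plan1 q (swp y) = swp (strategy_of_plan2 q y)"
  unfolding strategy_of_plan1_def strategy_of_plan2_def swp_def by (intro ext) simp

lemma lp_swp:
  fixes M :: "'k::finite \<Rightarrow> 'l::finite \<Rightarrow> 'a::finite \<Rightarrow> 'b::finite \<Rightarrow> real"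
  shows "lp2_feasible (Mt M) n q (\<lambda>k. - \<mu> k) (swp y) (uw w) (\<lambda>k. - w0 k) (- wt) \<longleftrightarrow> lp1_feasible M n \<mu> q y w w0 wt"
proof -
  have a: "(\<Sum>b\<in>UNIV. (\<Sum>l\<in>UNIV. Mt M l k b a * swp y l hb' ha' b) + uw w k hb' ha' b a)
      = - (\<Sum>b\<in>UNIV. (\<Sum>l\<in>UNIV. M k l a b * y l ha' hb' b) + w k ha' hb' a b)" for k a ha' hb'
    unfolding Mt_def swp_def uw_def by (simp add: sum_negf sum_subtractf sum.distrib)
  have c3: "(\<forall>k. (\<lambda>k. - w0 k) k + (\<lambda>k. - \<mu> k) k \<ge> - wt) \<longleftrightarrow> (\<forall>k. w0 k + \<mu> k \<le> wt)"
    by (auto simp: algebra_simps)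
  show ?thesis
    unfolding lp2_feasible_def lp1_feasible_def real_swp a c3
    by (auto simp: uw_def)
qed

theorem part2:
  fixes M :: "'k::finite \<Rightarrow> 'l::finite \<Rightarrow> 'a::finite \<Rightarrow> 'b::finite \<Rightarrow> real"
    and \<mu> :: "'k \<Rightarrow> real" and q :: "'l \<Rightarrow> real"
  assumes n: "1 \<le> n" and q: "simplex q"
  shows
    "dual1_lower_value M n \<mu> q = dual1_value M n \<mu> q
     \<and> (\<exists>y w w0. lp1_feasible M n \<mu> q y w w0 (dual1_value M n \<mu> q))
     \<and> (\<forall>y w w0 wt. lp1_feasible M n \<mu> q y w w0 wt \<longrightarrow> dual1_value M n \<mu> q \<le> wt)
     \<and> (\<forall>y w w0. lp1_feasible M n \<mu> q y w w0 (dual1_value M n \<mu> q) \<longrightarrow>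
          dual1_security_strategy M n \<mu> q (strategy_of_plan2 q y)
          \<and> (\<forall>l b. q l > 0 \<longrightarrow> strategy_of_plan2 q y l [] [] b = y l [] [] b / q l))"
proof -
  note P = part1[OF n q, of "Mt M" "\<lambda>k. - \<mu> k"]
  note V = value_swp[of M n q \<mu>]
  note P' = P[unfolded V]
  have P3: "ut \<le> - dual1_value M n \<mu> q" if "lp2_feasible (Mt M) n q (\<lambda>k. - \<mu> k) x u u0 ut" for x u u0 ut
    using P' that by blast
  have P4: "dual2_security_strategy (Mt M) n q (\<lambda>k. - \<mu> k) (strategy_of_plan1 q x)"
    if "lp2_feasible (Mt M) n q (\<lambda>k. - \<mu> k) x u u0 (- dual1_value M n \<mu> q)" for x u u0
    using P' that by blast
  have A: "dual1_lower_value M n \<mu> q = dual1_value M n \<mu> q"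
    using P upper_swp[of M n q \<mu>] V by simp
  have B: "\<exists>y w w0. lp1_feasible M n \<mu> q y w w0 (dual1_value M n \<mu> q)"
  proof -
    obtain x u u0 where "lp2_feasible (Mt M) n q (\<lambda>k. - \<mu> k) x u u0 (- dual1_value M n \<mu> q)"
      using P V by auto
    then have "lp2_feasible (Mt M) n q (\<lambda>k. - \<mu> k) (swp (swp x)) (uw (uw u)) (\<lambda>k. - (- u0 k)) (- dual1_value M n \<mu> q)"
      by simp
    then show ?thesis unfolding lp_swp by blast
  qed
  have C: "dual1_value M n \<mu> q \<le> wt" if "lp1_feasible M n \<mu> q y w w0 wt" for y w w0 wt
  proof -
    have "lp2_feasible (Mt M) n q (\<lambda>k. - \<mu> k) (swp y) (uw w) (\<lambda>k. - w0 k) (- wt)"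
      using that unfolding lp_swp .
    then have "- wt \<le> - dual1_value M n \<mu> q" by (rule P3)
    then show ?thesis by simp
  qed
  have D: "dual1_security_strategy M n \<mu> q (strategy_of_plan2 q y)
          \<and> (\<forall>l b. q l > 0 \<longrightarrow> strategy_of_plan2 q y l [] [] b = y l [] [] b / q l)"
    if "lp1_feasible M n \<mu> q y w w0 (dual1_value M n \<mu> q)" for y w w0
  proof
    have "lp2_feasible (Mt M) n q (\<lambda>k. - \<mu> k) (swp y) (uw w) (\<lambda>k. - w0 k) (- dual1_value M n \<mu> q)"
      using that unfolding lp_swp .
    then have "dual2_security_strategy (Mt M) n q (\<lambda>k. - \<mu> k) (strategy_of_plan1 q (swp y))"
      by (rule P4)
    then show "dual1_security_strategy M n \<mu> q (strategy_of_plan2 q y)"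
      unfolding strat_swp security_swp .
    show "\<forall>l b. q l > 0 \<longrightarrow> strategy_of_plan2 q y l [] [] b = y l [] [] b / q l"
      unfolding strategy_of_plan2_def Let_def by simp
  qed
  show ?thesis using A B C D by blast
qed


theorem theorem2:
  fixes M :: "'k::finite \<Rightarrow> 'l::finite \<Rightarrow> 'a::finite \<Rightarrow> 'b::finite \<Rightarrow> real"
    and T t :: nat
    and p_t :: "'k \<Rightarrow> real" and \<nu>_t :: "'l \<Rightarrow> real"
    and \<mu>_t :: "'k \<Rightarrow> real" and q_t :: "'l \<Rightarrow> real"
  assumes "1 \<le> t" and "t \<le> T"
    and "simplex p_t" and "simplex q_t"
  defines "n \<equiv> T + 1 - t"
  shows
    \<comment> \<open>(i) type 2 dual game\<close>
    "dual2_upper_value M n p_t \<nu>_t = dual2_value M n p_t \<nu>_t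
     \<and> (\<exists>x u u0. lp2_feasible M n p_t \<nu>_t x u u0 (dual2_value M n p_t \<nu>_t))
     \<and> (\<forall>x u u0 ut. lp2_feasible M n p_t \<nu>_t x u u0 ut \<longrightarrow> ut \<le> dual2_value M n p_t \<nu>_t)
     \<and> (\<forall>x u u0. lp2_feasible M n p_t \<nu>_t x u u0 (dual2_value M n p_t \<nu>_t) \<longrightarrow>
          dual2_security_strategy M n p_t \<nu>_t (strategy_of_plan1 p_t x)
          \<and> (\<forall>k a. p_t k > 0 \<longrightarrow> strategy_of_plan1 p_t x k [] [] a = x k [] [] a / p_t k))
     \<comment> \<open>(ii) type 1 dual game\<close>
     \<and> dual1_lower_value M n \<mu>_t q_t = dual1_value M n \<mu>_t q_t
     \<and> (\<exists>y w w0. lp1_feasible M n \<mu>_t q_t y w w0 (dual1_value M n \<mu>_t q_t))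
     \<and> (\<forall>y w w0 wt. lp1_feasible M n \<mu>_t q_t y w w0 wt \<longrightarrow> dual1_value M n \<mu>_t q_t \<le> wt)
     \<and> (\<forall>y w w0. lp1_feasible M n \<mu>_t q_t y w w0 (dual1_value M n \<mu>_t q_t) \<longrightarrow>
          dual1_security_strategy M n \<mu>_t q_t (strategy_of_plan2 q_t y)
          \<and> (\<forall>l b. q_t l > 0 \<longrightarrow> strategy_of_plan2 q_t y l [] [] b = y l [] [] b / q_t l))"
proof -
  have n1: "1 \<le> n" using assms(1,2) unfolding n_def by simp
  show ?thesis
    using part1[OF n1 assms(3), of M \<nu>_t] part2[OF n1 assms(4), of M \<mu>_t] by blast
qed

end
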